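(* Let $\{\omega_n:n\in\mathbb{N}_0\}$ and $\{\tilde\omega_n:n\in\mathbb{N}_0\}$ be the wavelet packets (defined in the context) with respect to a pair of biorthogonal scaling functions $\omega_0=\varphi$ and $\tilde\omega_0=\tilde\varphi$. Then $$\langle\omega_\ell(\cdot),\tilde\omega_n(\cdot-u(k))\rangle=\delta_{\ell,n}\,\delta_{0,k}\quad\text{for all }\ell,n,k\in\mathbb{N}_0.$$
   Context: $K$ is a local field of positive characteristic $p$ with ring of integers $\mathfrak{D}=\{|x|\le1\}$, prime ideal $\mathfrak{B}=\mathfrak{p}\mathfrak{D}$ ($\mathfrak{p}$ a prime element), $q=|\mathfrak{D}/\mathfrak{B}|=p^c$, Haar measure normalized with $\mathfrak{D}$ of measure $1$. Choose $\zeta_0=1,\zeta_1,\dots,\zeta_{c-1}\in\mathfrak{D}$ with $|\zeta_j|=1$ whose images form a basis of $\mathfrak{D}/\mathfrak{B}\cong GF(q)$ over $GF(p)$; for $0\le n<q$, $n=a_0+a_1p+\dots+a_{c-1}p^{c-1}$ ($0\le a_k<p$), put $u(n)=(a_0+a_1\zeta_1+\dots+a_{c-1}\zeta_{c-1})\mathfrak{p}^{-1}$, and for $n=b_0+b_1q+\dots+b_sq^s$ ($0\le b_k<q$), $u(n)=u(b_0)+u(b_1)\mathfrak{p}^{-1}+\dots+u(b_s)\mathfrak{p}^{-s}$. $\chi$ is a character of $(K,+)$ trivial on $\mathfrak{D}$, non-trivial on $\mathfrak{B}^{-1}$, $\chi_k(x)=\chi(u(k)x)$; $\hat f(\xi)=\int_Kf(x)\overline{\chi(\xi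 x)}dx$. Let $\varphi,\tilde\varphi\in L^2(K)$ and $\psi_\ell,\tilde\psi_\ell\in L^2(K)$ ($1\le\ell\le q-1$) satisfy $\varphi(x)=\sqrt q\sum_{k\in\mathbb{N}_0}a_k^0\varphi(\mathfrak{p}^{-1}x-u(k))$, $\psi_\ell(x)=\sqrt q\sum_ka_k^\ell\varphi(\mathfrak{p}^{-1}x-u(k))$, and the same with tildes (coefficients $\tilde a_k^s$), all coefficient sequences in $\ell^2(\mathbb{N}_0)$; masks $m_s(\xi)=\frac1{\sqrt q}\sum_ka_k^s\overline{\chi_k(\xi)}$, $\tilde m_s$ analogously ($0\le s\le q-1$). $\varphi$ is the scaling function of a multiresolution analysis of $L^2(K)$ and $\{\psi_\ell(\cdot-u(k))\}$ is a Riesz basis of a direct complement $W_0$ of $V_0$ in $V_1$. Biorthogonality: for all $k\in\mathbb{N}_0$, $1\le\ell,\ell'\le q-1$: $\langle\varphi,\tilde\varphi(\cdot-u(k))\rangle=\delta_{0,k}$, $\langle\varphi,\tilde\psi_\ell(\cdot-u(k))\rangle=0$, $\langle\tilde\varphi,\psi_\ell(\cdot-u(k))\rangle=0$, $\langle\psi_\ell,\tilde\psi_{\ell'}(\cdot-u(k))\rangle=\delta_{\ell,\ell'}\delta_{0,k}$. Wavelet packets: $\omega_0=\varphi$, $\tilde\omega_0=\tilde\varphi$, and for $n=qr+s$ with $r\in\mathbb{N}_0$, $0\le s\le q-1$: $\omega_n(x)=\sqrt q\sum_{k\in\mathbb{N}_0}a_k^s\omega_r(\mathfrak{p}^{-1}x-u(k))$,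 $\tilde\omega_n(x)=\sqrt q\sum_k\tilde a_k^s\tilde\omega_r(\mathfrak{p}^{-1}x-u(k))$. *)

theory Defs
  imports "HOL-Analysis.Analysis"
begin

text \<open>K is modelled as an abstract field type 'k with an absolute value absv.
 local_field_pc absv p: absv is a non-archimedean absolute value, non-trivial,
 K has characteristic p (prime), and the ring of integers D = {|x| <= 1} is
 (sequentially) compact in the metric |x - y|, i.e. K is a non-discrete locally
 compact field of characteristic p.\<close>

definition local_field_pc :: "('k::field \<Rightarrow> real) \<Rightarrow> nat \<Rightarrow> bool" where
  "local_field_pc absv p \<longleftrightarrow>
     prime p \<and> of_nat p = (0::'k) \<and>
     (\<forall>x. absv x \<ge> 0) \<and> (\<forall>x. absv x = 0 \<longleftrightarrow> x = 0) \<and>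
     (\<forall>x y. absv (x * y) = absv x * absv y) \<and>
     (\<forall>x y. absv (x + y) \<le> max (absv x) (absv y)) \<and>
     (\<exists>x. 0 < absv x \<and> absv x < 1) \<and>
     (\<forall>s::nat \<Rightarrow> 'k. (\<forall>n. absv (s n) \<le> 1) \<longrightarrow>
        (\<exists>r l. strict_mono r \<and> absv l \<le> 1 \<and> (\<lambda>n. absv (s (r n) - l)) \<longlonglongrightarrow> 0))"

text \<open>pr is a prime element (B = pr D), absv normalised so that |pr| = 1/q.\<close>
definition prime_element :: "('k::field \<Rightarrow> real) \<Rightarrow> nat \<Rightarrow> 'k \<Rightarrow> bool" where
  "prime_element absv q pr \<longleftrightarrow>
     0 < absv pr \<and> absv pr < 1 \<and> (\<forall>x. absv x < 1 \<longrightarrow> absv x \<le> absv pr) \<and>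
     absv pr = inverse (real q)"

definition digits :: "nat \<Rightarrow> nat \<Rightarrow> (nat \<Rightarrow> nat) set" where
  "digits p c = {a. (\<forall>k<c. a k < p) \<and> (\<forall>k\<ge>c. a k = 0)}"

text \<open>zeta_0 = 1, zeta_1, ..., zeta_{c-1} units of D whose images form a basis of
 D/B over GF(p): every residue class of D has exactly one representative
 a_0 zeta_0 + ... + a_{c-1} zeta_{c-1} with 0 <= a_k < p.\<close>
definition residue_basis :: "('k::field \<Rightarrow> real) \<Rightarrow> nat \<Rightarrow> nat \<Rightarrow> (nat \<Rightarrow> 'k) \<Rightarrow> bool" where
  "residue_basis absv p c zeta \<longleftrightarrow>
     zeta 0 = 1 \<and> (\<forall>j<c. absv (zeta j) = 1) \<and>
     (\<forall>x. absv x \<le> 1 \<longrightarrow>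
        (\<exists>!a. a \<in> digits p c \<and> absv (x - (\<Sum>k<c. of_nat (a k) * zeta k)) < 1))"

definition u0 :: "'k::field \<Rightarrow> (nat \<Rightarrow> 'k) \<Rightarrow> nat \<Rightarrow> nat \<Rightarrow> nat \<Rightarrow> 'k" where
  "u0 pr zeta p c n = (\<Sum>k<c. of_nat ((n div p ^ k) mod p) * zeta k) * inverse pr"

definition uK :: "'k::field \<Rightarrow> (nat \<Rightarrow> 'k) \<Rightarrow> nat \<Rightarrow> nat \<Rightarrow> nat \<Rightarrow> 'k" where
  "uK pr zeta p c n =
     (\<Sum>i\<le>n. u0 pr zeta p c ((n div (p ^ c) ^ i) mod (p ^ c)) * (inverse pr) ^ i)"

definition haar_normalized :: "('k::field \<Rightarrow> real) \<Rightarrow> 'k measure \<Rightarrow> bool" where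
  "haar_normalized absv M \<longleftrightarrow>
     space M = UNIV \<and>
     sets M = sigma_sets UNIV {{y. absv (y - x) < r} | x r. True} \<and>
     (\<forall>A\<in>sets M. \<forall>x. (\<lambda>y. x + y) ` A \<in> sets M \<and> emeasure M ((\<lambda>y. x + y) ` A) = emeasure M A) \<and>
     emeasure M {x. absv x \<le> 1} = 1"

definition L2 :: "'k measure \<Rightarrow> ('k \<Rightarrow> complex) set" where
  "L2 M = {f. f \<in> borel_measurable M \<and> integrable M (\<lambda>x. (cmod (f x))\<^sup>2)}"

definition L2norm :: "'k measure \<Rightarrow> ('k \<Rightarrow> complex) \<Rightarrow> real" where
  "L2norm M f = sqrt (LINT x|M. (cmod (f x))\<^sup>2)"

definition L2inner :: "'k measure \<Rightarrow> ('k \<Rightarrow> complex) \<Rightarrow> ('k \<Rightarrow> complex) \<Rightarrow> complex" where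
  "L2inner M f g = (LINT x|M. f x * cnj (g x))"

definition L2_series :: "'k measure \<Rightarrow> ('k \<Rightarrow> complex) \<Rightarrow> (nat \<Rightarrow> complex) \<Rightarrow> (nat \<Rightarrow> 'k \<Rightarrow> complex) \<Rightarrow> bool" where
  "L2_series M f c g \<longleftrightarrow> f \<in> L2 M \<and> (\<forall>k. g k \<in> L2 M) \<and>
     (\<lambda>N. L2norm M (\<lambda>x. f x - (\<Sum>k<N. c k * g k x))) \<longlonglongrightarrow> 0"

text \<open>Closed linear subspace of L^2(K) (as a set of representatives, closed under
 modification on null sets).\<close>
definition L2_subspace :: "'k measure \<Rightarrow> ('k \<Rightarrow> complex) set \<Rightarrow> bool" where
  "L2_subspace M V \<longleftrightarrow> V \<subseteq> L2 M \<and> (\<lambda>x. 0) \<in> V \<and>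
     (\<forall>f\<in>V. \<forall>g\<in>V. \<forall>a b. (\<lambda>x. a * f x + b * g x) \<in> V) \<and>
     (\<forall>f\<in>V. \<forall>g\<in>L2 M. L2norm M (\<lambda>x. f x - g x) = 0 \<longrightarrow> g \<in> V) \<and>
     (\<forall>f\<in>L2 M. (\<forall>e>0. \<exists>g\<in>V. L2norm M (\<lambda>x. f x - g x) < e) \<longrightarrow> f \<in> V)"

definition riesz_basis :: "'k measure \<Rightarrow> ('k \<Rightarrow> complex) set \<Rightarrow> 'i set \<Rightarrow> ('i \<Rightarrow> 'k \<Rightarrow> complex) \<Rightarrow> bool" where
  "riesz_basis M W I e \<longleftrightarrow> (\<forall>i\<in>I. e i \<in> W) \<and>
     (\<exists>A B. 0 < A \<and> A \<le> B \<and>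
        (\<forall>F c. finite F \<longrightarrow> F \<subseteq> I \<longrightarrow>
           A * (\<Sum>i\<in>F. (cmod (c i))\<^sup>2) \<le> (L2norm M (\<lambda>x. \<Sum>i\<in>F. c i * e i x))\<^sup>2 \<and>
           (L2norm M (\<lambda>x. \<Sum>i\<in>F. c i * e i x))\<^sup>2 \<le> B * (\<Sum>i\<in>F. (cmod (c i))\<^sup>2))) \<and>
     (\<forall>f\<in>W. \<forall>eps>0. \<exists>F c. finite F \<and> F \<subseteq> I \<and>
        L2norm M (\<lambda>x. f x - (\<Sum>i\<in>F. c i * e i x)) < eps)"

definition mra :: "'k::field measure \<Rightarrow> 'k \<Rightarrow> (nat \<Rightarrow> 'k) \<Rightarrow> (int \<Rightarrow> ('k \<Rightarrow> complex) set) \<Rightarrow> ('k \<Rightarrow> complex) \<Rightarrow> bool" where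
  "mra M pr u V phi \<longleftrightarrow>
     (\<forall>j. L2_subspace M (V j)) \<and>
     (\<forall>j. V j \<subseteq> V (j + 1)) \<and>
     (\<forall>f\<in>L2 M. \<forall>e>0. \<exists>j. \<exists>g\<in>V j. L2norm M (\<lambda>x. f x - g x) < e) \<and>
     (\<forall>f. (\<forall>j. f \<in> V j) \<longrightarrow> L2norm M f = 0) \<and>
     (\<forall>j f. f \<in> V j \<longleftrightarrow> (\<lambda>x. f (inverse pr * x)) \<in> V (j + 1)) \<and>
     riesz_basis M (V 0) UNIV (\<lambda>k x. phi (x - u k))"

definition direct_complement :: "'k measure \<Rightarrow> ('k \<Rightarrow> complex) set \<Rightarrow> ('k \<Rightarrow> complex) set \<Rightarrow> ('k \<Rightarrow> complex) set \<Rightarrow> bool" where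
  "direct_complement M W V0 V1 \<longleftrightarrow> L2_subspace M W \<and>
     (\<forall>f\<in>V0 \<inter> W. L2norm M f = 0) \<and>
     V1 = {(\<lambda>x. g x + h x) | g h. g \<in> V0 \<and> h \<in> W}"

definition dil_shift :: "'k::field \<Rightarrow> (nat \<Rightarrow> 'k) \<Rightarrow> ('k \<Rightarrow> complex) \<Rightarrow> nat \<Rightarrow> 'k \<Rightarrow> complex" where
  "dil_shift pr u g k = (\<lambda>x. g (inverse pr * x - u k))"

end

theory Submission
  imports Defs
begin


locale lf =
  fixes absv :: "'k::field \<Rightarrow> real" and p c :: nat and pr :: 'k and zeta :: "nat \<Rightarrow> 'k"
    and M :: "'k measure"
  assumes K: "local_field_pc absv p"
    and pr: "prime_element absv (p ^ c) pr"
    and zeta: "residue_basis absv p c zeta"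
    and haar: "haar_normalized absv M"
begin

lemma av_nonneg: "absv x \<ge> 0" using K by (simp add: local_field_pc_def)
lemma av_zero[simp]: "absv x = 0 \<longleftrightarrow> x = 0" using K by (simp add: local_field_pc_def)
lemma av_0[simp]: "absv 0 = 0" by simp
lemma av_mult: "absv (x * y) = absv x * absv y" using K by (simp add: local_field_pc_def)
lemma av_ultra: "absv (x + y) \<le> max (absv x) (absv y)" using K by (simp add: local_field_pc_def)
lemma p_prime: "prime p" using K by (simp add: local_field_pc_def)
lemma char_p: "of_nat p = (0::'k)" using K by (simp add: local_field_pc_def)

lemma av_one[simp]: "absv 1 = 1"
proof -
  have "absv 1 = absv 1 * absv 1" using av_mult[of 1 1] by simp
  moreover have "absv 1 \<noteq> 0" by simp
  ultimately show ?thesis by (metis mult_cancel_right1)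
qed

lemma av_minus[simp]: "absv (- x) = absv x"
proof -
  have m1: "absv (-1) * absv (-1) = 1" using av_mult[of "-1" "-1"] by simp
  have "absv (-1) \<ge> 0" by (rule av_nonneg)
  then have "absv (-1) = 1" using m1
    by (metis abs_of_nonneg mult_cancel_right1 real_sqrt_abs2 real_sqrt_mult_self real_sqrt_one)
  then show ?thesis using av_mult[of "-1" x] by simp
qed

lemma av_inverse: "absv (inverse x) = inverse (absv x)"
proof (cases "x = 0")
  case False
  then have "absv (inverse x) * absv x = 1" using av_mult[of "inverse x" x] by simp
  then show ?thesis using False by (metis av_zero inverse_unique mult.commute)
qed simp

lemma av_divide: "absv (x / y) = absv x / absv y"
  by (simp add: divide_inverse av_mult av_inverse)

lemma av_sym: "absv (x - y) = absv (y - x)"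
  by (metis av_minus minus_diff_eq)

lemma av_add_le: "absv x \<le> r \<Longrightarrow> absv y \<le> r \<Longrightarrow> absv (x + y) \<le> r"
  using av_ultra[of x y] by linarith
lemma av_add_less: "absv x < r \<Longrightarrow> absv y < r \<Longrightarrow> absv (x + y) < r"
  using av_ultra[of x y] by linarith
lemma av_diff_le: "absv x \<le> r \<Longrightarrow> absv y \<le> r \<Longrightarrow> absv (x - y) \<le> r"
  using av_add_le[of x r "-y"] by simp
lemma av_diff_less: "absv x < r \<Longrightarrow> absv y < r \<Longrightarrow> absv (x - y) < r"
  using av_add_less[of x r "-y"] by simp

definition q :: real where "q = real (p ^ c)"

lemma av_pr: "absv pr = inverse q" using pr by (simp add: prime_element_def q_def)
lemma pr_lt1: "absv pr < 1" "0 < absv pr" using pr by (auto simp: prime_element_def)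
lemma q_gt1: "q > 1"
proof -
  have "q = inverse (absv pr)" using av_pr by simp
  then show ?thesis using pr_lt1 by (simp add: one_less_inverse)
qed
lemma q_pos: "q > 0" using q_gt1 by simp
lemma pr_nz: "pr \<noteq> 0" using pr_lt1 by auto

lemma small_le: "absv x < 1 \<Longrightarrow> absv x \<le> inverse q"
  using pr av_pr by (auto simp: prime_element_def)

lemma lt_q_le1: assumes "absv x < q" shows "absv x \<le> 1"
proof (rule ccontr)
  assume "\<not> absv x \<le> 1"
  then have x: "absv x > 1" "x \<noteq> 0" by auto
  then have "absv (inverse x) < 1" by (simp add: av_inverse inverse_less_1_iff)
  then have "inverse (absv x) \<le> inverse q" using small_le av_inverse by metis
  then have "q \<le> absv x" using x q_pos
    by (metis inverse_le_imp_le less_trans zero_less_one)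
  then show False using assms by simp
qed

lemma av_pow: "absv (x ^ n) = absv x ^ n"
  by (induction n) (simp_all add: av_mult)

end



definition digsum :: "nat \<Rightarrow> (nat \<Rightarrow> nat) \<Rightarrow> nat \<Rightarrow> nat" where
  "digsum b d L = (\<Sum>j<L. d j * b ^ j)"

lemma digsum_less: "(\<forall>j<L. d j < b) \<Longrightarrow> digsum b d L < b ^ L"
proof (induction L)
  case 0 then show ?case by (simp add: digsum_def)
next
  case (Suc L)
  then have ih: "digsum b d L < b ^ L" and dl: "d L < b" by auto
  have "digsum b d (Suc L) = digsum b d L + d L * b ^ L" by (simp add: digsum_def)
  also have "\<dots> < b ^ L + d L * b ^ L" using ih by simp
  also have "\<dots> = (Suc (d L)) * b ^ L" by simp
  also have "\<dots> \<le> b * b ^ L" using dl by (intro mult_right_mono) auto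
  finally show ?case by simp
qed

lemma digsum_digit:
  assumes "\<forall>j<L. d j < b" "0 < b"
  shows "digsum b d L div b ^ i mod b = (if i < L then d i else 0)"
  using assms
proof (induction L arbitrary: i)
  case 0 then show ?case by (simp add: digsum_def)
next
  case (Suc L)
  then have ih: "\<And>i. digsum b d L div b ^ i mod b = (if i < L then d i else 0)"
    and dl: "d L < b" and lt: "digsum b d L < b ^ L" using digsum_less[of L d b] by auto
  have eq: "digsum b d (Suc L) = digsum b d L + d L * b ^ L" by (simp add: digsum_def)
  show ?case
  proof (cases "i < L")
    case True
    then obtain t where t: "L = i + Suc t" by (metis add_Suc_right less_iff_Suc_add add.commute)
    have e2: "digsum b d (Suc L) = digsum b d L + (d L * b ^ t * b) * b ^ i"
      using eq by (simp add: t power_add ac_simps)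
    have "b ^ i > 0" using Suc.prems(2) by simp
    then have "digsum b d (Suc L) div b ^ i = digsum b d L div b ^ i + d L * b ^ t * b"
      unfolding e2 by (metis add.commute div_mult_self1 less_not_refl2)
    then have "digsum b d (Suc L) div b ^ i mod b = digsum b d L div b ^ i mod b" by simp
    then show ?thesis using ih True by simp
  next
    case False
    show ?thesis
    proof (cases "i = L")
      case True
      have "digsum b d (Suc L) div b ^ L = d L"
        using eq lt Suc.prems(2) by (simp add: div_add1_eq div_mult_self2)
      then show ?thesis using True dl by simp
    next
      case False
      with \<open>\<not> i < L\<close> have "Suc L \<le> i" by simp
      then have "b ^ Suc L \<le> b ^ i" using Suc.prems(2) using power_increasing[of "Suc L" i b] by simp
      moreover have "digsum b d (Suc L) < b ^ Suc L" using digsum_less[of "Suc L" d b] Suc.prems by blast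
      ultimately show ?thesis using False \<open>\<not> i < L\<close> by simp
    qed
  qed
qed

context lf begin

definition uu :: "nat \<Rightarrow> 'k" where "uu = uK pr zeta p c"

definition val :: "nat \<Rightarrow> (nat \<Rightarrow> nat \<Rightarrow> nat) \<Rightarrow> 'k" where
  "val B e = (\<Sum>i<B. \<Sum>k<c. of_nat (e i k) * zeta k * inverse pr ^ Suc i)"

lemma p_pos: "p > 0" using p_prime prime_gt_0_nat by blast
lemma Q_ge2: "p ^ c \<ge> 2"
proof -
  have "real (p ^ c) > 1" using q_gt1 q_def by simp
  then show ?thesis by linarith
qed

lemma uu_val: assumes "n < B"
  shows "uu n = val B (\<lambda>i k. (n div (p^c)^i) mod p^c div p^k mod p)"
proof -
  let ?f = "\<lambda>i. \<Sum>k<c. of_nat ((n div (p^c)^i) mod p^c div p^k mod p) * zeta k * inverse pr ^ Suc i"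
  have "uu n = (\<Sum>i\<le>n. ?f i)"
    unfolding uu_def uK_def u0_def
    by (intro sum.cong refl) (simp add: sum_distrib_right sum_distrib_left mult_ac)
  also have "\<dots> = (\<Sum>i<B. ?f i)"
  proof (rule sum.mono_neutral_left)
    show "{..n} \<subseteq> {..<B}" using assms by auto
    show "\<forall>i\<in>{..<B} - {..n}. ?f i = 0"
    proof
      fix i assume "i \<in> {..<B} - {..n}"
      then have "n < i" by auto
      moreover have "i < (p^c)^i" using Q_ge2 by (metis less_exp order_less_le_trans power_mono zero_le_numeral)
      ultimately have "n div (p^c)^i = 0" by simp
      then show "?f i = 0" by simp
    qed
  qed simp
  finally show ?thesis unfolding val_def .
qed

lemma of_nat_mod_p: "(of_nat (x mod p) :: 'k) = of_nat x"
proof -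
  have "(of_nat x :: 'k) = of_nat (x mod p + p * (x div p))" by simp
  also have "\<dots> = of_nat (x mod p)" by (simp only: of_nat_add of_nat_mult char_p) simp
  finally show ?thesis by simp
qed

lemma val_mod: "val B e = val B (\<lambda>i k. e i k mod p)"
  unfolding val_def by (simp add: of_nat_mod_p)

lemma val_realize: assumes "\<forall>i k. e i k < p" shows "\<exists>n. uu n = val B e"
proof -
  define d where "d i = digsum p (e i) c" for i
  have dlt: "\<forall>i. d i < p ^ c" unfolding d_def using digsum_less assms by blast
  define n where "n = digsum (p^c) d B"
  have dig1: "n div (p^c)^i mod p^c = (if i < B then d i else 0)" for i
    unfolding n_def using digsum_digit[of B d "p^c" i] dlt Q_ge2 p_pos by auto
  have dig2: "d i div p^k mod p = (if k < c then e i k else 0)" for i k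
    unfolding d_def using digsum_digit[of c "e i" p k] assms p_pos by auto
  define B' where "B' = max B (Suc n)"
  have "uu n = val B' (\<lambda>i k. (n div (p^c)^i) mod p^c div p^k mod p)"
    by (rule uu_val) (simp add: B'_def)
  also have "\<dots> = (\<Sum>i<B'. \<Sum>k<c. of_nat (if i < B then e i k else 0) * zeta k * inverse pr ^ Suc i)"
    unfolding val_def by (intro sum.cong refl) (simp add: dig1 dig2)
  also have "\<dots> = (\<Sum>i<B. \<Sum>k<c. of_nat (if i < B then e i k else 0) * zeta k * inverse pr ^ Suc i)"
    by (rule sum.mono_neutral_right) (auto simp: B'_def)
  also have "\<dots> = val B e" unfolding val_def by (intro sum.cong refl) simp
  finally show ?thesis by blast
qed

lemma val_add: "val B e1 + val B e2 = val B (\<lambda>i k. e1 i k + e2 i k)"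
  unfolding val_def by (simp add: sum.distrib[symmetric] distrib_right)

lemma of_nat_pm1: "(of_nat (p - 1) :: 'k) = - 1"
proof -
  have "(of_nat (p - 1) :: 'k) + 1 = of_nat p" using p_pos
    by (metis Suc_diff_1 of_nat_Suc add.commute)
  then show ?thesis using char_p by (simp add: eq_neg_iff_add_eq_0)
qed

lemma of_nat_pm1': "(of_nat (p - Suc 0) :: 'k) = - 1" using of_nat_pm1 by simp

lemma val_neg: "- val B e = val B (\<lambda>i k. (p - 1) * e i k)"
  unfolding val_def by (simp add: of_nat_mult of_nat_pm1' sum_negf[symmetric])

lemma val_dil: "inverse pr * val B e = val (Suc B) (\<lambda>i k. if i = 0 then 0 else e (i - 1) k)"
  unfolding val_def
  by (simp only: sum.lessThan_Suc_shift) (simp add: sum_distrib_left ac_simps)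

lemma val_realize': "\<exists>n. uu n = val B e"
proof -
  have "\<exists>n. uu n = val B (\<lambda>i k. e i k mod p)" by (rule val_realize) (simp add: p_pos)
  then show ?thesis using val_mod by metis
qed

lemma uu_closed: "\<exists>m. uu m = uu j' + inverse pr * uu k - uu j"
proof -
  define B where "B = Suc (j + j' + k)"
  define d where "d n i k = (n div (p^c)^i) mod p^c div p^k mod p" for n i k
  have a: "uu j' = val (Suc B) (d j')" "uu j = val (Suc B) (d j)" "uu k = val B (d k)"
    unfolding d_def by (rule uu_val; simp add: B_def)+
  have "uu j' + inverse pr * uu k - uu j = val (Suc B) (d j') + val (Suc B) (\<lambda>i k'. if i = 0 then 0 else d k (i - 1) k') + - val (Suc B) (d j)"
    by (simp only: a val_dil diff_conv_add_uminus)
  also have "\<dots> = val (Suc B) (\<lambda>i k'. d j' i k' + (if i = 0 then 0 else d k (i - 1) k') + (p - 1) * d j i k')"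
    by (simp only: val_neg val_add)
  finally have eq: "uu j' + inverse pr * uu k - uu j = val (Suc B) (\<lambda>i k'. d j' i k' + (if i = 0 then 0 else d k (i - 1) k') + (p - 1) * d j i k')" .
  obtain m where "uu m = val (Suc B) (\<lambda>i k'. d j' i k' + (if i = 0 then 0 else d k (i - 1) k') + (p - 1) * d j i k')"
    using val_realize' by blast
  then show ?thesis using eq by (intro exI[of _ m]) simp
qed

lemma uu_0[simp]: "uu 0 = 0" by (simp add: uu_def uK_def u0_def)

lemma uu_neg: "\<exists>m. uu m = - uu k"
  using uu_closed[of 0 0 k] by simp

end



context lf begin

definition ball :: "'k \<Rightarrow> real \<Rightarrow> 'k set" where "ball x r = {y. absv (y - x) < r}"
definition Ebs :: "'k set set" where "Ebs = {ball x r | x r. True}"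

lemma M_space[simp]: "space M = UNIV" using haar by (simp add: haar_normalized_def)
lemma M_sets: "sets M = sigma_sets UNIV Ebs"
  using haar by (simp add: haar_normalized_def Ebs_def ball_def)
lemma ball_sets[simp]: "ball x r \<in> sets M"
  unfolding M_sets Ebs_def by (rule sigma_sets.Basic) blast
lemma haar_trans: "\<forall>A\<in>sets M. \<forall>x. (\<lambda>y. x + y) ` A \<in> sets M \<and> emeasure M ((\<lambda>y. x + y) ` A) = emeasure M A"
  using haar unfolding haar_normalized_def by blast
lemma trans_sets: "A \<in> sets M \<Longrightarrow> (\<lambda>y. x + y) ` A \<in> sets M"
  using haar_trans by blast
lemma trans_emeasure: "A \<in> sets M \<Longrightarrow> emeasure M ((\<lambda>y. x + y) ` A) = emeasure M A"
  using haar_trans by blast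
lemma minus_eq_plus: "(\<lambda>y. y - a) = (\<lambda>y::'k. (- a) + y)" by (rule ext) simp
lemma trans_sets': "A \<in> sets M \<Longrightarrow> (\<lambda>y. y - a) ` A \<in> sets M"
  unfolding minus_eq_plus by (rule trans_sets)
lemma trans_emeasure': "A \<in> sets M \<Longrightarrow> emeasure M ((\<lambda>y. y - a) ` A) = emeasure M A"
  unfolding minus_eq_plus by (rule trans_emeasure)
lemma D0_measure: "emeasure M {x. absv x \<le> 1} = 1"
  using haar by (simp add: haar_normalized_def)

lemma preimage_trans: "(\<lambda>y::'k. y + a) -` A = (\<lambda>y. y - a) ` A"
proof
  show "(\<lambda>y. y + a) -` A \<subseteq> (\<lambda>y. y - a) ` A"
  proof
    fix x assume "x \<in> (\<lambda>y. y + a) -` A"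
    then have "x + a \<in> A" by simp
    moreover have "x = (x + a) - a" by simp
    ultimately show "x \<in> (\<lambda>y. y - a) ` A" by blast
  qed
qed auto

lemma meas_trans[measurable]: "(\<lambda>y. y + a) \<in> measurable M M"
  by (rule measurableI) (simp_all add: preimage_trans trans_sets')

lemma meas_trans': "(\<lambda>y. y - a) \<in> measurable M M"
  using meas_trans[of "- a"] by simp

lemma distr_trans: "distr M M (\<lambda>y. y + a) = M"
proof (rule measure_eqI)
  fix A assume A: "A \<in> sets (distr M M (\<lambda>y. y + a))"
  then have A': "A \<in> sets M" by simp
  show "emeasure (distr M M (\<lambda>y. y + a)) A = emeasure M A"
    using A' by (simp add: emeasure_distr[OF meas_trans A'] preimage_trans trans_emeasure')
qed simp

lemma integral_trans:
  fixes f :: "'k \<Rightarrow> 'b::{banach, second_countable_topology}"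
  assumes "f \<in> borel_measurable M"
  shows "(\<integral>x. f (x + a) \<partial>M) = integral\<^sup>L M f"
  using integral_distr[OF meas_trans assms, of a] distr_trans by simp

lemma integrable_trans:
  fixes f :: "'k \<Rightarrow> 'b::{banach, second_countable_topology}"
  assumes "f \<in> borel_measurable M"
  shows "integrable M (\<lambda>x. f (x + a)) \<longleftrightarrow> integrable M f"
  using integrable_distr_eq[OF meas_trans assms, of a] distr_trans by simp

lemma ball_dil_preimage:
  "(\<lambda>x. inverse pr * x) -` ball y r = ball (pr * y) (r * absv pr)"
proof -
  have "absv (inverse pr * x - y) = absv (x - pr * y) / absv pr" for x
  proof -
    have "inverse pr * x - y = inverse pr * (x - pr * y)" using pr_nz by (simp add: field_simps)
    then show ?thesis by (simp add: av_mult av_inverse divide_inverse mult.commute)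
  qed
  then show ?thesis unfolding ball_def using pr_lt1 by (auto simp: pos_divide_less_eq)
qed

lemma meas_dil[measurable]: "(\<lambda>x. inverse pr * x) \<in> measurable M M"
proof (rule measurable_sigma_sets[OF M_sets])
  show "Ebs \<subseteq> Pow UNIV" by simp
  show "(\<lambda>x. inverse pr * x) \<in> space M \<rightarrow> UNIV" by simp
  fix Y assume "Y \<in> Ebs"
  then obtain y r where "Y = ball y r" unfolding Ebs_def by blast
  then show "(\<lambda>x. inverse pr * x) -` Y \<inter> space M \<in> sets M" by (simp add: ball_dil_preimage)
qed

lemma ball_trans: "ball x r = (\<lambda>y. x + y) ` ball 0 r"
proof
  show "ball x r \<subseteq> (\<lambda>y. x + y) ` ball 0 r"
  proof
    fix z assume "z \<in> ball x r"
    then have "z - x \<in> ball 0 r" "z = x + (z - x)" by (auto simp: ball_def)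
    then show "z \<in> (\<lambda>y. x + y) ` ball 0 r" by blast
  qed
qed (auto simp: ball_def)

lemma ball_measure: "emeasure M (ball x r) = emeasure M (ball 0 r)"
  by (simp add: ball_trans[of x] trans_emeasure)

lemma ball_recenter: assumes "y \<in> ball x r" shows "ball x r = ball y r"
proof -
  have a: "absv (y - x) < r" using assms by (simp add: ball_def)
  have "absv (z - x) < r \<longleftrightarrow> absv (z - y) < r" for z
  proof
    assume "absv (z - x) < r"
    then have "absv ((z - x) - (y - x)) < r" using a av_diff_less by blast
    then show "absv (z - y) < r" by simp
  next
    assume "absv (z - y) < r"
    then have "absv ((z - y) + (y - x)) < r" using a av_add_less by blast
    then show "absv (z - x) < r" by simp
  qed
  then show ?thesis by (auto simp: ball_def)
qed

lemma Int_stable_Ebs: "Int_stable Ebs"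
proof (rule Int_stableI)
  fix A B assume "A \<in> Ebs" "B \<in> Ebs"
  then obtain x1 r1 x2 r2 where A: "A = ball x1 r1" and B: "B = ball x2 r2" unfolding Ebs_def by blast
  show "A \<inter> B \<in> Ebs"
  proof (cases "A \<inter> B = {}")
    case True
    have "ball 0 0 = {}" by (auto simp: ball_def av_nonneg not_less)
    then show ?thesis using True unfolding Ebs_def by blast
  next
    case False
    then obtain y where y: "y \<in> A" "y \<in> B" by blast
    then have "A = ball y r1" "B = ball y r2" using A B ball_recenter by auto
    then have "A \<inter> B = ball y (min r1 r2)" by (auto simp: ball_def)
    then show ?thesis unfolding Ebs_def by blast
  qed
qed

end



context lf begin

definition cos :: "'k set \<Rightarrow> 'k set \<Rightarrow> 'k set set" where
  "cos S H = (\<lambda>t. (\<lambda>y. t + y) ` H) ` S"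

lemma coset_measure:
  assumes H0: "0 \<in> H" and Hd: "\<forall>a\<in>H. \<forall>b\<in>H. a - b \<in> H" and HS: "H \<subseteq> S"
    and S: "\<forall>a\<in>S. \<forall>b\<in>S. a + b \<in> S" and Hm: "H \<in> sets M" and fin: "finite (cos S H)"
  shows "emeasure M S = of_nat (card (cos S H)) * emeasure M H"
proof -
  have Hn: "- b \<in> H" if "b \<in> H" for b
  proof -
    have "0 - b \<in> H" using Hd H0 that by blast
    then show ?thesis by simp
  qed
  have Ha: "a + b \<in> H" if "a \<in> H" "b \<in> H" for a b
  proof -
    have "a - (- b) \<in> H" using Hd Hn that by blast
    then show ?thesis by simp
  qed
  have sub: "(\<lambda>y. t1 + y) ` H \<subseteq> (\<lambda>y. t2 + y) ` H"
    if zz: "z \<in> (\<lambda>y. t1 + y) ` H" "z \<in> (\<lambda>y. t2 + y) ` H" for z t1 t2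
  proof
    obtain h1 h2 where h: "h1 \<in> H" "h2 \<in> H" "z = t1 + h1" "z = t2 + h2" using zz by blast
    then have t2: "t2 = t1 + h1 - h2" by (simp add: eq_diff_eq)
    fix w assume "w \<in> (\<lambda>y. t1 + y) ` H"
    then obtain h where hh: "h \<in> H" "w = t1 + h" by blast
    have "h2 - h1 \<in> H" using Hd h by blast
    then have "h2 - h1 + h \<in> H" using Ha hh by blast
    moreover have "w = t2 + (h2 - h1 + h)" unfolding t2 hh(2) by (simp add: algebra_simps)
    ultimately show "w \<in> (\<lambda>y. t2 + y) ` H" by blast
  qed
  have disj: "disjoint_family_on id (cos S H)"
    unfolding disjoint_family_on_def
  proof (intro ballI impI)
    fix C1 C2 assume C12: "C1 \<in> cos S H" "C2 \<in> cos S H" and ne: "C1 \<noteq> C2"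
    then obtain t1 t2 where C: "C1 = (\<lambda>y. t1 + y) ` H" "C2 = (\<lambda>y. t2 + y) ` H"
      unfolding cos_def by blast
    show "id C1 \<inter> id C2 = {}"
    proof (rule ccontr)
      assume "id C1 \<inter> id C2 \<noteq> {}"
      then obtain z where z: "z \<in> C1" "z \<in> C2" by auto
      have "C1 \<subseteq> C2" using sub[of z t1 t2] z C by blast
      moreover have "C2 \<subseteq> C1" using sub[of z t2 t1] z C by blast
      ultimately show False using ne by blast
    qed
  qed
  have ms: "id ` cos S H \<subseteq> sets M"
  proof
    fix C assume "C \<in> id ` cos S H"
    then obtain t where "C = (\<lambda>y. t + y) ` H" unfolding cos_def by auto
    then show "C \<in> sets M" using trans_sets[OF Hm] by simp
  qed
  have un: "(\<Union>C\<in>cos S H. id C) = S"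
  proof
    show "(\<Union>C\<in>cos S H. id C) \<subseteq> S"
    proof
      fix x assume "x \<in> (\<Union>C\<in>cos S H. id C)"
      then obtain t h where "t \<in> S" "h \<in> H" "x = t + h" unfolding cos_def by auto
      then show "x \<in> S" using HS S by blast
    qed
    show "S \<subseteq> (\<Union>C\<in>cos S H. id C)"
    proof
      fix t assume "t \<in> S"
      have "t = t + 0" by simp
      then have "t \<in> (\<lambda>y. t + y) ` H" using H0 by blast
      moreover have "(\<lambda>y. t + y) ` H \<in> cos S H" using \<open>t \<in> S\<close> unfolding cos_def by blast
      ultimately show "t \<in> (\<Union>C\<in>cos S H. id C)" by auto
    qed
  qed
  have se: "(\<Sum>C\<in>cos S H. emeasure M (id C)) = emeasure M (\<Union>C\<in>cos S H. id C)"
    by (rule sum_emeasure[OF ms disj fin])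
  have "emeasure M S = (\<Sum>C\<in>cos S H. emeasure M (id C))" by (simp only: se un)
  also have "\<dots> = (\<Sum>C\<in>cos S H. emeasure M H)"
  proof (rule sum.cong)
    fix C assume "C \<in> cos S H"
    then obtain t where "C = (\<lambda>y. t + y) ` H" unfolding cos_def by auto
    then show "emeasure M (id C) = emeasure M H" using trans_emeasure[OF Hm] by simp
  qed simp
  also have "\<dots> = of_nat (card (cos S H)) * emeasure M H" by (simp only: sum_constant)
  finally show ?thesis .
qed

definition D0 :: "'k set" where "D0 = {y. absv y \<le> 1}"
definition B1 :: "'k set" where "B1 = {y. absv y < 1}"
definition n0 :: nat where "n0 = card (cos D0 B1)"

lemma finite_digits: "finite (digits p c)"
proof -
  have "digits p c = {f. \<forall>x. (x \<in> {..<c} \<longrightarrow> f x \<in> {..<p}) \<and> (x \<notin> {..<c} \<longrightarrow> f x = 0)}"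
    unfolding digits_def by (auto simp: not_less)
  then show ?thesis using finite_set_of_finite_funs[of "{..<c}" "{..<p}" 0] by simp
qed

lemma coset_eq: assumes "absv (t - v) < 1"
  shows "(\<lambda>y. t + y) ` B1 = (\<lambda>y. v + y) ` B1"
proof -
  have "(\<lambda>y. t + y) ` B1 = ball t 1" using ball_trans[of t 1] by (simp add: B1_def ball_def)
  moreover have "(\<lambda>y. v + y) ` B1 = ball v 1" using ball_trans[of v 1] by (simp add: B1_def ball_def)
  moreover have "t \<in> ball v 1" using assms by (simp add: ball_def)
  then have "ball v 1 = ball t 1" by (rule ball_recenter)
  ultimately show ?thesis by simp
qed

lemma finite_cos0: "finite (cos D0 B1)"
proof -
  define R where "R = (\<lambda>a. \<Sum>k<c. of_nat (a k) * zeta k) ` digits p c"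
  have "cos D0 B1 \<subseteq> (\<lambda>v. (\<lambda>y. v + y) ` B1) ` R"
  proof
    fix C assume "C \<in> cos D0 B1"
    then obtain t where t: "absv t \<le> 1" "C = (\<lambda>y. t + y) ` B1" unfolding cos_def D0_def by blast
    then obtain a where a: "a \<in> digits p c" "absv (t - (\<Sum>k<c. of_nat (a k) * zeta k)) < 1"
      using zeta unfolding residue_basis_def by blast
    then show "C \<in> (\<lambda>v. (\<lambda>y. v + y) ` B1) ` R"
      using coset_eq[OF a(2)] t unfolding R_def by blast
  qed
  moreover have "finite R" unfolding R_def using finite_digits by simp
  ultimately show ?thesis using finite_subset by blast
qed

lemma n0_pos: "n0 > 0"
proof -
  have "B1 \<in> cos D0 B1" unfolding cos_def D0_def by (rule image_eqI[of _ _ 0]) auto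
  then show ?thesis unfolding n0_def using finite_cos0 card_gt_0_iff by blast
qed

end



context lf begin

lemma exists_z: assumes "\<rho> > 0" shows "\<exists>z. z \<noteq> 0 \<and> (\<forall>y. absv y < \<rho> \<longleftrightarrow> absv y \<le> absv z)"
proof -
  define j :: int where "j = \<lceil>log q \<rho>\<rceil> - 1"
  define z where "z = (if j \<ge> 0 then inverse pr ^ nat j else pr ^ nat (- j))"
  have qi: "absv (inverse pr) = q" using av_pr by (simp add: av_inverse)
  have az: "absv z = q powr j"
  proof (cases "j \<ge> 0")
    case True
    then have "absv z = q ^ nat j" by (simp add: z_def av_pow qi)
    also have "\<dots> = q powr real (nat j)" using q_pos by (simp add: powr_realpow)
    finally show ?thesis using True by simp
  next
    case False
    then have "absv z = inverse q ^ nat (- j)" by (simp add: z_def av_pow av_pr)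
    also have "\<dots> = inverse (q powr real (nat (- j)))" using q_pos by (simp add: powr_realpow power_inverse)
    also have "\<dots> = q powr (- real (nat (- j)))" using q_pos by (simp add: powr_minus)
    finally show ?thesis using False by simp
  qed
  have zpos: "absv z > 0" using az q_pos by simp
  then have znz: "z \<noteq> 0" by auto
  have lt: "q powr j < \<rho>"
  proof -
    have "real_of_int j < log q \<rho>" unfolding j_def by linarith
    then have "q powr j < q powr (log q \<rho>)" using q_gt1 by simp
    then show ?thesis using assms q_gt1 by simp
  qed
  have ge: "\<rho> \<le> q powr j * q"
  proof -
    have "log q \<rho> \<le> real_of_int j + 1" unfolding j_def by linarith
    then have "q powr (log q \<rho>) \<le> q powr (real_of_int j + 1)" using q_gt1 by simp
    then show ?thesis using assms q_gt1 by (simp add: powr_add)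
  qed
  have "absv y < \<rho> \<longleftrightarrow> absv y \<le> absv z" for y
  proof
    assume y: "absv y < \<rho>"
    show "absv y \<le> absv z"
    proof (cases "y = 0")
      case False
      have "absv (y * inverse z) = absv y / absv z" by (simp add: av_mult av_inverse divide_inverse)
      also have "\<dots> < \<rho> / absv z" using y zpos by (simp add: divide_strict_right_mono)
      also have "\<dots> \<le> q" using ge az zpos by (simp add: divide_le_eq mult.commute)
      finally have "absv (y * inverse z) \<le> 1" by (rule lt_q_le1)
      then have "absv y / absv z \<le> 1" by (simp add: av_mult av_inverse divide_inverse)
      then show ?thesis using zpos by (simp add: pos_divide_le_eq)
    qed (simp add: av_nonneg)
  next
    assume "absv y \<le> absv z" then show "absv y < \<rho>" using lt az by simp
  qed
  then show ?thesis using znz by blast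
qed

lemma key_ball: "emeasure M (ball 0 \<rho>) = of_nat n0 * emeasure M (ball 0 (\<rho> / q))"
proof (cases "\<rho> > 0")
  case False
  then have "ball 0 \<rho> = {}" "ball 0 (\<rho> / q) = {}" using q_pos
    by (auto simp: ball_def not_less intro: order_trans[OF _ av_nonneg] divide_nonpos_pos)
  then show ?thesis by simp
next
  case True
  obtain z where znz: "z \<noteq> 0" and zc: "\<And>y. absv y < \<rho> \<longleftrightarrow> absv y \<le> absv z"
    using exists_z[OF True] by blast
  have "absv z \<noteq> 0" using znz by simp
  then have zpos: "absv z > 0" using av_nonneg[of z] by linarith
  define S where "S = ball 0 \<rho>"
  define S' where "S' = ball 0 (\<rho> / q)"
  have S: "S = {y. absv y \<le> absv z}" unfolding S_def ball_def using zc by simp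
  have S': "S' = {y. absv y < absv z}"
  proof -
    have "absv y < \<rho> / q \<longleftrightarrow> absv y < absv z" for y
    proof -
      have "absv y < \<rho> / q \<longleftrightarrow> absv (y * inverse pr) < \<rho>"
        using q_pos by (simp add: av_mult av_inverse av_pr pos_less_divide_eq)
      also have "\<dots> \<longleftrightarrow> absv y * q \<le> absv z" using zc[of "y * inverse pr"] by (simp add: av_mult av_inverse av_pr)
      also have "\<dots> \<longleftrightarrow> absv y < absv z"
      proof
        assume "absv y * q \<le> absv z"
        moreover have "absv y < absv y * q \<or> y = 0"
        proof (cases "y = 0")
          case False
          then have "absv y > 0" using av_nonneg[of y] av_zero[of y] by linarith
          then show ?thesis using q_gt1 by simp
        qed simp
        ultimately show "absv y < absv z" using zpos by auto
      next
        assume a: "absv y < absv z"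
        then have "absv (y / z) < 1" using zpos by (simp add: av_divide)
        then have "absv (y / z) \<le> inverse q" by (rule small_le)
        then show "absv y * q \<le> absv z" using zpos q_pos
          by (simp add: av_divide divide_le_eq field_simps)
      qed
      finally show ?thesis .
    qed
    then show ?thesis unfolding S'_def ball_def by simp
  qed
  have imD: "(\<lambda>y. z * y) ` D0 = S"
  proof
    show "(\<lambda>y. z * y) ` D0 \<subseteq> S" unfolding S D0_def using zpos
      by (auto simp: av_mult mult_le_cancel_left1)
    show "S \<subseteq> (\<lambda>y. z * y) ` D0"
    proof
      fix y assume "y \<in> S"
      then have "y / z \<in> D0" "y = z * (y / z)" using zpos znz unfolding S D0_def
        by (auto simp: av_divide divide_le_eq)
      then show "y \<in> (\<lambda>y. z * y) ` D0" by blast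
    qed
  qed
  have imB: "(\<lambda>y. z * y) ` B1 = S'"
  proof
    show "(\<lambda>y. z * y) ` B1 \<subseteq> S'" unfolding S' B1_def using zpos
      by (auto simp: av_mult)
    show "S' \<subseteq> (\<lambda>y. z * y) ` B1"
    proof
      fix y assume "y \<in> S'"
      then have "y / z \<in> B1" "y = z * (y / z)" using zpos znz unfolding S' B1_def
        by (auto simp: av_divide divide_less_eq)
      then show "y \<in> (\<lambda>y. z * y) ` B1" by blast
    qed
  qed
  have cosimg: "cos S S' = (\<lambda>A. (\<lambda>y. z * y) ` A) ` cos D0 B1"
  proof -
    have "(\<lambda>A. (\<lambda>y. z * y) ` A) ` cos D0 B1 = (\<lambda>t. (\<lambda>y. z * y) ` ((\<lambda>y. t + y) ` B1)) ` D0"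
      unfolding cos_def by (simp add: image_image)
    also have "\<dots> = (\<lambda>t. (\<lambda>y. z * t + y) ` S') ` D0"
      unfolding imB[symmetric] by (simp add: image_image distrib_left)
    also have "\<dots> = (\<lambda>s. (\<lambda>y. s + y) ` S') ` ((\<lambda>y. z * y) ` D0)"
      by (simp add: image_image)
    finally show ?thesis unfolding imD cos_def by simp
  qed
  have inj: "inj_on (\<lambda>A. (\<lambda>y. z * y) ` A) X" for X
  proof -
    have "inj (\<lambda>y. z * y)" using znz by (auto intro: injI)
    then show ?thesis by (meson inj_image_eq_iff inj_onI)
  qed
  have fin: "finite (cos S S')" using cosimg finite_cos0 by simp
  have card: "card (cos S S') = n0" unfolding cosimg n0_def by (rule card_image[OF inj])
  have "emeasure M S = of_nat (card (cos S S')) * emeasure M S'"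
  proof (rule coset_measure)
    show "0 \<in> S'" unfolding S' using zpos by simp
    show "\<forall>a\<in>S'. \<forall>b\<in>S'. a - b \<in> S'" unfolding S' using av_diff_less by blast
    show "S' \<subseteq> S" unfolding S S' by auto
    show "\<forall>a\<in>S. \<forall>b\<in>S. a + b \<in> S" unfolding S using av_add_le by blast
    show "S' \<in> sets M" unfolding S'_def by simp
  qed (rule fin)
  then show ?thesis using card unfolding S_def S'_def by simp
qed

end



context lf begin

lemma ball0_fin: "emeasure M (ball 0 (q ^ i)) \<noteq> \<infinity>"
proof (induction i)
  case 0
  have "ball 0 1 \<subseteq> {x. absv x \<le> 1}" by (auto simp: ball_def)
  then have "emeasure M (ball 0 1) \<le> emeasure M {x. absv x \<le> 1}"
    by (rule emeasure_mono) (use D0_measure emeasure_notin_sets in fastforce)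
  then show ?case using D0_measure by (auto simp: top_unique)
next
  case (Suc i)
  have "q ^ Suc i / q = q ^ i" using q_pos by simp
  then have "emeasure M (ball 0 (q ^ Suc i)) = of_nat n0 * emeasure M (ball 0 (q ^ i))"
    using key_ball[of "q ^ Suc i"] by simp
  then show ?case using Suc by (simp add: ennreal_mult_eq_top_iff)
qed

lemma dil_distr: "distr M M (\<lambda>x. inverse pr * x) = density M (\<lambda>_. ennreal (1 / real n0))"
proof (rule measure_eqI_generator_eq[OF Int_stable_Ebs, of UNIV _ _ "\<lambda>i. ball 0 (q ^ i)"])
  show "Ebs \<subseteq> Pow UNIV" by simp
  show "sets (distr M M (\<lambda>x. inverse pr * x)) = sigma_sets UNIV Ebs" by (simp add: M_sets)
  show "sets (density M (\<lambda>_. ennreal (1 / real n0))) = sigma_sets UNIV Ebs" by (simp add: M_sets)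
  show "range (\<lambda>i. ball 0 (q ^ i)) \<subseteq> Ebs" unfolding Ebs_def by blast
  show "(\<Union>i. ball 0 (q ^ i)) = UNIV"
  proof (intro set_eqI iffI)
    fix y :: 'k
    obtain n where "absv y < q ^ n" using real_arch_pow[OF q_gt1] by blast
    then show "y \<in> (\<Union>i. ball 0 (q ^ i))" by (auto simp: ball_def)
  qed auto
  have eqb: "emeasure (distr M M (\<lambda>x. inverse pr * x)) (ball x r) = emeasure M (ball 0 (r / q))" for x r
  proof -
    have "emeasure (distr M M (\<lambda>x. inverse pr * x)) (ball x r) = emeasure M ((\<lambda>x. inverse pr * x) -` ball x r \<inter> space M)"
      by (rule emeasure_distr[OF meas_dil ball_sets])
    also have "\<dots> = emeasure M (ball (pr * x) (r * absv pr))" by (simp only: ball_dil_preimage M_space Int_UNIV_right)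
    also have "\<dots> = emeasure M (ball 0 (r / q))"
      by (simp only: ball_measure[of "pr * x"] av_pr divide_inverse)
    finally show ?thesis .
  qed
  fix i
  show "emeasure (distr M M (\<lambda>x. inverse pr * x)) (ball 0 (q ^ i)) \<noteq> \<infinity>"
  proof -
    have qi: "q ^ i > 0" using q_pos by simp
    have "q ^ i \<le> q ^ i * q" using q_gt1 qi by simp
    then have "q ^ i / q \<le> q ^ i" using q_pos by (simp add: pos_divide_le_eq)
    then have "ball 0 (q ^ i / q) \<subseteq> ball 0 (q ^ i)" by (auto simp: ball_def)
    then have "emeasure M (ball 0 (q ^ i / q)) \<le> emeasure M (ball 0 (q ^ i))"
      by (rule emeasure_mono) simp
    then show ?thesis using ball0_fin[of i] eqb by (auto simp: top_unique)
  qed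
next
  fix X assume "X \<in> Ebs"
  then obtain x r where X: "X = ball x r" unfolding Ebs_def by blast
  have n0r: "ennreal (1 / real n0) * of_nat n0 = 1"
    using n0_pos by (simp add: ennreal_of_nat_eq_real_of_nat ennreal_mult''[symmetric])
  have "emeasure (distr M M (\<lambda>x. inverse pr * x)) (ball x r) = emeasure M ((\<lambda>x. inverse pr * x) -` ball x r \<inter> space M)"
    by (rule emeasure_distr[OF meas_dil ball_sets])
  also have "\<dots> = emeasure M (ball 0 (r / q))"
    by (simp only: ball_dil_preimage M_space Int_UNIV_right ball_measure[of "pr * x"] av_pr divide_inverse)
  also have "\<dots> = ennreal (1 / real n0) * (of_nat n0 * emeasure M (ball 0 (r / q)))"
    by (simp only: mult.assoc[symmetric] n0r mult_1)
  also have "\<dots> = ennreal (1 / real n0) * emeasure M (ball x r)" by (simp only: key_ball[of r] ball_measure[of x])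
  also have "\<dots> = emeasure (density M (\<lambda>_. ennreal (1 / real n0))) (ball x r)"
    by (simp add: emeasure_density_const)
  finally show "emeasure (distr M M (\<lambda>x. inverse pr * x)) X = emeasure (density M (\<lambda>_. ennreal (1 / real n0))) X"
    unfolding X .
qed

lemma integral_dil:
  fixes f :: "'k \<Rightarrow> complex"
  assumes f: "f \<in> borel_measurable M"
  shows "(\<integral>x. f (inverse pr * x) \<partial>M) = complex_of_real (1 / real n0) * integral\<^sup>L M f"
proof -
  have "(\<integral>x. f (inverse pr * x) \<partial>M) = integral\<^sup>L (distr M M (\<lambda>x. inverse pr * x)) f"
    by (rule integral_distr[OF meas_dil f, symmetric])
  also have "\<dots> = integral\<^sup>L (density M (\<lambda>_. ennreal (1 / real n0))) f" by (simp add: dil_distr)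
  also have "\<dots> = (\<integral>x. (1 / real n0) *\<^sub>R f x \<partial>M)"
    by (rule integral_density[OF f]) auto
  also have "\<dots> = complex_of_real (1 / real n0) * integral\<^sup>L M f"
    by (simp add: scaleR_conv_of_real)
  finally show ?thesis .
qed

end



lemma real_cs_aux:
  fixes A B I :: real
  assumes A: "A \<ge> 0" and B: "B \<ge> 0" and H: "\<And>t. t > 0 \<Longrightarrow> I \<le> (t * A + B / t) / 2"
  shows "I \<le> sqrt A * sqrt B"
proof (cases "A > 0 \<and> B > 0")
  case True
  define t where "t = sqrt B / sqrt A"
  have sA: "sqrt A * sqrt A = A" "sqrt A > 0" using True by simp_all
  have sB: "sqrt B * sqrt B = B" "sqrt B > 0" using True by simp_all
  have t: "t > 0" using sA sB by (simp add: t_def)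
  have "t * A = sqrt B / sqrt A * (sqrt A * sqrt A)" using sA unfolding t_def by simp
  also have "\<dots> = sqrt A * sqrt B" using sA(2) by (simp add: field_simps)
  finally have 1: "t * A = sqrt A * sqrt B" .
  have "B / t = (sqrt B * sqrt B) / (sqrt B / sqrt A)" using sB t_def by simp
  also have "\<dots> = sqrt A * sqrt B" using sA(2) sB(2) by (simp add: field_simps)
  finally have 2: "B / t = sqrt A * sqrt B" .
  show ?thesis using H[OF t] 1 2 by simp
next
  case False
  then have z: "A = 0 \<or> B = 0" using A B by auto
  show ?thesis
  proof (rule ccontr)
    assume "\<not> ?thesis"
    then have I: "I > 0" using z by auto
    show False
    proof (cases "A = 0")
      case True
      define t where "t = B / I + 1"
      have "B / I \<ge> 0" using I B by simp
      then have t: "t > 0" by (simp add: t_def)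
      have "B / t < I"
      proof -
        have "I * t = B + I" using I by (simp add: t_def field_simps)
        then have "B < I * t" using I by simp
        then show ?thesis using t by (simp add: divide_less_eq mult.commute)
      qed
      then show False using H[OF t] True I by simp
    next
      case False
      then have B0: "B = 0" using z by simp
      have Ap: "A > 0" using False A by simp
      define t where "t = I / A"
      have t: "t > 0" using I Ap by (simp add: t_def)
      have "t * A = I" using Ap by (simp add: t_def)
      then show False using H[OF t] B0 I by simp
    qed
  qed
qed

lemma meas_cnj[measurable]:
  assumes [measurable]: "g \<in> borel_measurable M"
  shows "(\<lambda>x. cnj (g x)) \<in> borel_measurable M"
proof -
  have "(\<lambda>x. cnj (g x)) = (\<lambda>x. complex_of_real (Re (g x)) - \<i> * complex_of_real (Im (g x)))"
    by (rule ext) (simp add: complex_eq_iff)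
  also have "\<dots> \<in> borel_measurable M" by measurable
  finally show ?thesis .
qed

lemma L2_meas: "f \<in> L2 M \<Longrightarrow> f \<in> borel_measurable M" by (simp add: L2_def)
lemma L2_int: "f \<in> L2 M \<Longrightarrow> integrable M (\<lambda>x. (cmod (f x))\<^sup>2)" by (simp add: L2_def)

lemma cmod_sq_add_le: "(cmod (a + b))\<^sup>2 \<le> 2 * (cmod a)\<^sup>2 + 2 * (cmod b)\<^sup>2"
proof -
  have "(cmod (a + b))\<^sup>2 \<le> (cmod a + cmod b)\<^sup>2" by (simp add: norm_triangle_ineq power_mono)
  also have "\<dots> \<le> 2 * (cmod a)\<^sup>2 + 2 * (cmod b)\<^sup>2"
  proof -
    have "0 \<le> (cmod a - cmod b)\<^sup>2" by simp
    then show ?thesis unfolding power2_diff power2_sum by linarith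
  qed
  finally show ?thesis .
qed

lemma L2_add: assumes "f \<in> L2 M" "g \<in> L2 M" shows "(\<lambda>x. f x + g x) \<in> L2 M"
proof -
  have [measurable]: "f \<in> borel_measurable M" "g \<in> borel_measurable M" using assms by (simp_all add: L2_meas)
  have m: "(\<lambda>x. f x + g x) \<in> borel_measurable M" by measurable
  have "integrable M (\<lambda>x. (cmod (f x + g x))\<^sup>2)"
  proof (rule Bochner_Integration.integrable_bound)
    show "integrable M (\<lambda>x. 2 * (cmod (f x))\<^sup>2 + 2 * (cmod (g x))\<^sup>2)"
      by (intro Bochner_Integration.integrable_add integrable_mult_right) (simp_all add: L2_int assms)
    show "(\<lambda>x. (cmod (f x + g x))\<^sup>2) \<in> borel_measurable M" by measurable
    have "norm ((cmod (f x + g x))\<^sup>2) \<le> norm (2 * (cmod (f x))\<^sup>2 + 2 * (cmod (g x))\<^sup>2)" for x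
    proof -
      have "norm ((cmod (f x + g x))\<^sup>2) = (cmod (f x + g x))\<^sup>2" by simp
      moreover have "norm (2 * (cmod (f x))\<^sup>2 + 2 * (cmod (g x))\<^sup>2) = 2 * (cmod (f x))\<^sup>2 + 2 * (cmod (g x))\<^sup>2"
        by simp
      ultimately show ?thesis using cmod_sq_add_le by simp
    qed
    then show "AE x in M. norm ((cmod (f x + g x))\<^sup>2) \<le> norm (2 * (cmod (f x))\<^sup>2 + 2 * (cmod (g x))\<^sup>2)"
      by (intro AE_I2)
  qed
  then show ?thesis using m by (simp add: L2_def)
qed

lemma L2_scale: assumes "f \<in> L2 M" shows "(\<lambda>x. a * f x) \<in> L2 M"
proof -
  have [measurable]: "f \<in> borel_measurable M" using assms by (simp_all add: L2_meas)
  have m: "(\<lambda>x. a * f x) \<in> borel_measurable M" by measurable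
  have "integrable M (\<lambda>x. (cmod a)\<^sup>2 * (cmod (f x))\<^sup>2)"
    by (intro integrable_mult_right) (simp add: L2_int assms)
  then have "integrable M (\<lambda>x. (cmod (a * f x))\<^sup>2)" by (simp add: norm_mult power_mult_distrib)
  then show ?thesis using m by (simp add: L2_def)
qed

lemma L2_neg: assumes "f \<in> L2 M" shows "(\<lambda>x. - f x) \<in> L2 M"
  using L2_scale[OF assms, of "-1"] by simp

lemma L2_diff: assumes "f \<in> L2 M" "g \<in> L2 M" shows "(\<lambda>x. f x - g x) \<in> L2 M"
  using L2_add[OF assms(1) L2_neg[OF assms(2)]] by simp

lemma L2_zero: "(\<lambda>x. 0) \<in> L2 M" by (simp add: L2_def)

lemma L2_sum: fixes N :: nat assumes "\<And>k. k < N \<Longrightarrow> F k \<in> L2 M" shows "(\<lambda>x. \<Sum>k<N. c k * F k x) \<in> L2 M"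
  using assms
proof (induction N)
  case 0 then show ?case by (simp add: L2_zero)
next
  case (Suc N)
  have "(\<lambda>x. (\<Sum>k<N. c k * F k x) + c N * F N x) \<in> L2 M"
    using Suc by (intro L2_add L2_scale) auto
  then show ?case by simp
qed

lemma inner_integrable: assumes "f \<in> L2 M" "g \<in> L2 M" shows "integrable M (\<lambda>x. f x * cnj (g x))"
proof (rule Bochner_Integration.integrable_bound)
  have [measurable]: "f \<in> borel_measurable M" "g \<in> borel_measurable M" using assms by (simp_all add: L2_meas)
  show "integrable M (\<lambda>x. (cmod (f x))\<^sup>2 + (cmod (g x))\<^sup>2)"
    by (intro Bochner_Integration.integrable_add) (simp_all add: L2_int assms)
  show "(\<lambda>x. f x * cnj (g x)) \<in> borel_measurable M" by measurable
  have "cmod (a * cnj b) \<le> (cmod a)\<^sup>2 + (cmod b)\<^sup>2" for a b :: complex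
  proof -
    have "cmod (a * cnj b) = cmod a * cmod b" by (simp add: norm_mult)
    also have "\<dots> \<le> (cmod a)\<^sup>2 + (cmod b)\<^sup>2"
    proof -
      have "0 \<le> (cmod a - cmod b)\<^sup>2" by simp
      moreover have "0 \<le> cmod a * cmod b" by simp
      ultimately show ?thesis unfolding power2_diff by linarith
    qed
    finally show ?thesis .
  qed
  then have "norm (f x * cnj (g x)) \<le> norm ((cmod (f x))\<^sup>2 + (cmod (g x))\<^sup>2)" for x
    by simp
  then show "AE x in M. norm (f x * cnj (g x)) \<le> norm ((cmod (f x))\<^sup>2 + (cmod (g x))\<^sup>2)"
    by (intro AE_I2)
qed




lemma pt_ineq: fixes a b t :: real assumes "t > 0"
  shows "a * b \<le> (t * a\<^sup>2 + b\<^sup>2 / t) / 2"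
proof -
  have "0 \<le> (t * a - b)\<^sup>2" by simp
  then have "2 * t * (a * b) \<le> t\<^sup>2 * a\<^sup>2 + b\<^sup>2" by (simp add: power2_diff power_mult_distrib algebra_simps)
  then have "2 * t * (a * b) / t \<le> (t\<^sup>2 * a\<^sup>2 + b\<^sup>2) / t" using divide_right_mono[OF _ less_imp_le[OF assms]] by blast
  moreover have "2 * t * (a * b) / t = 2 * (a * b)" using assms by simp
  moreover have "(t\<^sup>2 * a\<^sup>2 + b\<^sup>2) / t = t * a\<^sup>2 + b\<^sup>2 / t" using assms
    by (simp add: add_divide_distrib power2_eq_square)
  ultimately show ?thesis by simp
qed

lemma L2_cs: assumes f: "f \<in> L2 M" and g: "g \<in> L2 M"
  shows "cmod (L2inner M f g) \<le> L2norm M f * L2norm M g"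
proof -
  define A where "A = (\<integral>x. (cmod (f x))\<^sup>2 \<partial>M)"
  define B where "B = (\<integral>x. (cmod (g x))\<^sup>2 \<partial>M)"
  define I where "I = (\<integral>x. cmod (f x) * cmod (g x) \<partial>M)"
  have iA: "integrable M (\<lambda>x. (cmod (f x))\<^sup>2)" and iB: "integrable M (\<lambda>x. (cmod (g x))\<^sup>2)"
    using f g by (simp_all add: L2_int)
  have iI0: "integrable M (\<lambda>x. norm (f x * cnj (g x)))"
    using inner_integrable[OF f g] by (rule integrable_norm)
  have nn: "norm (f x * cnj (g x)) = cmod (f x) * cmod (g x)" for x by (simp add: norm_mult)
  have iI: "integrable M (\<lambda>x. cmod (f x) * cmod (g x))" using iI0 unfolding nn .
  have A0: "A \<ge> 0" unfolding A_def by (rule integral_nonneg_AE) simp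
  have B0: "B \<ge> 0" unfolding B_def by (rule integral_nonneg_AE) simp
  have "cmod (L2inner M f g) \<le> (\<integral>x. norm (f x * cnj (g x)) \<partial>M)"
    unfolding L2inner_def by (rule integral_norm_bound)
  also have "\<dots> = I" unfolding I_def nn ..
  also have "I \<le> sqrt A * sqrt B"
  proof (rule real_cs_aux[OF A0 B0])
    fix t :: real assume t: "t > 0"
    have "I \<le> (\<integral>x. (t * (cmod (f x))\<^sup>2 + (cmod (g x))\<^sup>2 / t) / 2 \<partial>M)"
      unfolding I_def
    proof (rule integral_mono[OF iI])
      show "integrable M (\<lambda>x. (t * (cmod (f x))\<^sup>2 + (cmod (g x))\<^sup>2 / t) / 2)"
        using iA iB by (intro integrable_divide Bochner_Integration.integrable_add integrable_mult_right) auto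
      show "cmod (f x) * cmod (g x) \<le> (t * (cmod (f x))\<^sup>2 + (cmod (g x))\<^sup>2 / t) / 2" for x
        by (rule pt_ineq[OF t])
    qed
    also have "\<dots> = (t * A + B / t) / 2"
      unfolding A_def B_def using iA iB by simp
    finally show "I \<le> (t * A + B / t) / 2" .
  qed
  finally show ?thesis unfolding L2norm_def A_def B_def .
qed

lemma inner_sum_left:
  fixes N :: nat
  assumes F: "\<And>k. k < N \<Longrightarrow> F k \<in> L2 M" and g: "g \<in> L2 M"
  shows "L2inner M (\<lambda>x. \<Sum>k<N. c k * F k x) g = (\<Sum>k<N. c k * L2inner M (F k) g)"
proof -
  have i: "integrable M (\<lambda>x. c k * (F k x * cnj (g x)))" if "k \<in> {..<N}" for k
    using inner_integrable[OF F g] that by auto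
  have "L2inner M (\<lambda>x. \<Sum>k<N. c k * F k x) g = (\<integral>x. (\<Sum>k<N. c k * (F k x * cnj (g x))) \<partial>M)"
    unfolding L2inner_def by (simp add: sum_distrib_right mult.assoc)
  also have "\<dots> = (\<Sum>k<N. (\<integral>x. c k * (F k x * cnj (g x)) \<partial>M))"
    by (rule Bochner_Integration.integral_sum[OF i])
  also have "\<dots> = (\<Sum>k<N. c k * L2inner M (F k) g)"
    unfolding L2inner_def by (intro sum.cong refl integral_mult_right) (use inner_integrable[OF F g] in auto)
  finally show ?thesis .
qed

lemma inner_sum_right:
  fixes N :: nat
  assumes G: "\<And>k. k < N \<Longrightarrow> G k \<in> L2 M" and f: "f \<in> L2 M"
  shows "L2inner M f (\<lambda>x. \<Sum>k<N. c k * G k x) = (\<Sum>k<N. cnj (c k) * L2inner M f (G k))"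
proof -
  have i: "integrable M (\<lambda>x. cnj (c k) * (f x * cnj (G k x)))" if "k \<in> {..<N}" for k
    using inner_integrable[OF f G] that by auto
  have "L2inner M f (\<lambda>x. \<Sum>k<N. c k * G k x) = (\<integral>x. (\<Sum>k<N. cnj (c k) * (f x * cnj (G k x))) \<partial>M)"
    unfolding L2inner_def by (simp add: sum_distrib_left mult_ac)
  also have "\<dots> = (\<Sum>k<N. (\<integral>x. cnj (c k) * (f x * cnj (G k x)) \<partial>M))"
    by (rule Bochner_Integration.integral_sum[OF i])
  also have "\<dots> = (\<Sum>k<N. cnj (c k) * L2inner M f (G k))"
    unfolding L2inner_def by (intro sum.cong refl integral_mult_right) (use inner_integrable[OF f G] in auto)
  finally show ?thesis .
qed

lemma inner_diff_left: assumes "f \<in> L2 M" "h \<in> L2 M" "g \<in> L2 M"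
  shows "L2inner M (\<lambda>x. f x - h x) g = L2inner M f g - L2inner M h g"
  unfolding L2inner_def using inner_integrable[OF assms(1,3)] inner_integrable[OF assms(2,3)]
  by (simp add: left_diff_distrib)

lemma inner_diff_right: assumes "f \<in> L2 M" "h \<in> L2 M" "g \<in> L2 M"
  shows "L2inner M g (\<lambda>x. f x - h x) = L2inner M g f - L2inner M g h"
  unfolding L2inner_def using inner_integrable[OF assms(3,1)] inner_integrable[OF assms(3,2)]
  by (simp add: right_diff_distrib)

lemma lim_left:
  assumes S: "L2_series M f \<alpha> F" and g: "g \<in> L2 M"
  shows "(\<lambda>N. \<Sum>k<N. \<alpha> k * L2inner M (F k) g) \<longlonglongrightarrow> L2inner M f g"
proof -
  have f: "f \<in> L2 M" and F: "\<And>k. F k \<in> L2 M"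
    and conv: "(\<lambda>N. L2norm M (\<lambda>x. f x - (\<Sum>k<N. \<alpha> k * F k x))) \<longlonglongrightarrow> 0"
    using S by (auto simp: L2_series_def)
  have SN: "(\<lambda>x. \<Sum>k<N. \<alpha> k * F k x) \<in> L2 M" for N by (rule L2_sum) (rule F)
  have eq: "L2inner M f g - (\<Sum>k<N. \<alpha> k * L2inner M (F k) g) = L2inner M (\<lambda>x. f x - (\<Sum>k<N. \<alpha> k * F k x)) g" for N
    using inner_diff_left[OF f SN[of N] g] inner_sum_left[where N=N and c=\<alpha>, OF F g] by simp
  have "(\<lambda>N. L2inner M f g - (\<Sum>k<N. \<alpha> k * L2inner M (F k) g)) \<longlonglongrightarrow> 0"
  proof (rule Lim_null_comparison)
    show "\<forall>\<^sub>F N in sequentially. norm (L2inner M f g - (\<Sum>k<N. \<alpha> k * L2inner M (F k) g))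
           \<le> L2norm M (\<lambda>x. f x - (\<Sum>k<N. \<alpha> k * F k x)) * L2norm M g"
      unfolding eq using L2_cs[OF L2_diff[OF f SN] g] by simp
    show "(\<lambda>N. L2norm M (\<lambda>x. f x - (\<Sum>k<N. \<alpha> k * F k x)) * L2norm M g) \<longlonglongrightarrow> 0"
      using tendsto_mult_left_zero[OF conv] by simp
  qed
  from tendsto_minus[OF this] have "(\<lambda>N. (\<Sum>k<N. \<alpha> k * L2inner M (F k) g) - L2inner M f g) \<longlonglongrightarrow> 0"
    by simp
  then show ?thesis by (rule LIM_zero_cancel)
qed

lemma lim_right:
  assumes S: "L2_series M g \<beta> G" and f: "f \<in> L2 M"
  shows "(\<lambda>N. \<Sum>k<N. cnj (\<beta> k) * L2inner M f (G k)) \<longlonglongrightarrow> L2inner M f g"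
proof -
  have g: "g \<in> L2 M" and G: "\<And>k. G k \<in> L2 M"
    and conv: "(\<lambda>N. L2norm M (\<lambda>x. g x - (\<Sum>k<N. \<beta> k * G k x))) \<longlonglongrightarrow> 0"
    using S by (auto simp: L2_series_def)
  have SN: "(\<lambda>x. \<Sum>k<N. \<beta> k * G k x) \<in> L2 M" for N by (rule L2_sum) (rule G)
  have eq: "L2inner M f g - (\<Sum>k<N. cnj (\<beta> k) * L2inner M f (G k)) = L2inner M f (\<lambda>x. g x - (\<Sum>k<N. \<beta> k * G k x))" for N
    using inner_diff_right[OF g SN[of N] f] inner_sum_right[where N=N and c=\<beta>, OF G f] by simp
  have "(\<lambda>N. L2inner M f g - (\<Sum>k<N. cnj (\<beta> k) * L2inner M f (G k))) \<longlonglongrightarrow> 0"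
  proof (rule Lim_null_comparison)
    show "\<forall>\<^sub>F N in sequentially. norm (L2inner M f g - (\<Sum>k<N. cnj (\<beta> k) * L2inner M f (G k)))
           \<le> L2norm M f * L2norm M (\<lambda>x. g x - (\<Sum>k<N. \<beta> k * G k x))"
      unfolding eq using L2_cs[OF f L2_diff[OF g SN]] by simp
    show "(\<lambda>N. L2norm M f * L2norm M (\<lambda>x. g x - (\<Sum>k<N. \<beta> k * G k x))) \<longlonglongrightarrow> 0"
      using tendsto_mult_right_zero[OF conv] by simp
  qed
  from tendsto_minus[OF this] have "(\<lambda>N. (\<Sum>k<N. cnj (\<beta> k) * L2inner M f (G k)) - L2inner M f g) \<longlonglongrightarrow> 0"
    by simp
  then show ?thesis by (rule LIM_zero_cancel)
qed




context lf begin

lemma integral_trans':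
  fixes f :: "'k \<Rightarrow> 'b::{banach, second_countable_topology}"
  assumes "f \<in> borel_measurable M"
  shows "(\<integral>x. f (x - a) \<partial>M) = integral\<^sup>L M f"
  using integral_trans[OF assms, of "- a"] by simp

lemma integrable_trans':
  fixes f :: "'k \<Rightarrow> 'b::{banach, second_countable_topology}"
  assumes "f \<in> borel_measurable M"
  shows "integrable M (\<lambda>x. f (x - a)) \<longleftrightarrow> integrable M f"
  using integrable_trans[OF assms, of "- a"] by simp

lemma meas_comp_trans: "f \<in> borel_measurable M \<Longrightarrow> (\<lambda>x. f (x - w)) \<in> borel_measurable M"
  using measurable_compose[OF meas_trans'] by blast

lemma L2_trans: assumes "f \<in> L2 M" shows "(\<lambda>x. f (x - w)) \<in> L2 M"
proof -
  have m: "f \<in> borel_measurable M" using assms by (simp add: L2_meas)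
  have m2: "(\<lambda>x. (cmod (f x))\<^sup>2) \<in> borel_measurable M" using m by measurable
  have "integrable M (\<lambda>x. (cmod (f (x - w)))\<^sup>2)"
    using integrable_trans'[OF m2, of w] L2_int[OF assms] by simp
  then show ?thesis using meas_comp_trans[OF m] by (simp add: L2_def)
qed

lemma L2norm_trans: assumes "f \<in> borel_measurable M" shows "L2norm M (\<lambda>x. f (x - w)) = L2norm M f"
proof -
  have m2: "(\<lambda>x. (cmod (f x))\<^sup>2) \<in> borel_measurable M" using assms by measurable
  show ?thesis unfolding L2norm_def using integral_trans'[OF m2, of w] by simp
qed

lemma series_trans: assumes S: "L2_series M g \<beta> G"
  shows "L2_series M (\<lambda>x. g (x - w)) \<beta> (\<lambda>k x. G k (x - w))"
proof -
  have g: "g \<in> L2 M" and G: "\<And>k. G k \<in> L2 M"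
    and conv: "(\<lambda>N. L2norm M (\<lambda>x. g x - (\<Sum>k<N. \<beta> k * G k x))) \<longlonglongrightarrow> 0"
    using S by (auto simp: L2_series_def)
  have "L2norm M (\<lambda>x. g (x - w) - (\<Sum>k<N. \<beta> k * G k (x - w))) = L2norm M (\<lambda>x. g x - (\<Sum>k<N. \<beta> k * G k x))" for N
  proof -
    have "(\<lambda>x. g x - (\<Sum>k<N. \<beta> k * G k x)) \<in> L2 M" by (intro L2_diff L2_sum g G)
    then show ?thesis using L2norm_trans[OF L2_meas, of "\<lambda>x. g x - (\<Sum>k<N. \<beta> k * G k x)" w] by simp
  qed
  then show ?thesis using conv g G L2_trans unfolding L2_series_def by simp
qed

lemma dil_inner: assumes F0: "F0 \<in> L2 M" and G0: "G0 \<in> L2 M"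
  shows "L2inner M (\<lambda>x. F0 (inverse pr * x - a)) (\<lambda>x. G0 (inverse pr * x - b))
       = complex_of_real (1 / real n0) * L2inner M F0 (\<lambda>x. G0 (x - (b - a)))"
proof -
  have [measurable]: "F0 \<in> borel_measurable M" "G0 \<in> borel_measurable M" using F0 G0 by (simp_all add: L2_meas)
  define h where "h y = F0 (y - a) * cnj (G0 (y - b))" for y
  have mh: "h \<in> borel_measurable M"
  proof -
    have "(\<lambda>y. F0 (y - a)) \<in> borel_measurable M" "(\<lambda>y. G0 (y - b)) \<in> borel_measurable M"
      by (simp_all add: meas_comp_trans)
    then show ?thesis unfolding h_def by measurable
  qed
  have mh': "(\<lambda>y. F0 y * cnj (G0 (y - (b - a)))) \<in> borel_measurable M"
  proof -
    have "(\<lambda>y. G0 (y - (b - a))) \<in> borel_measurable M" by (simp add: meas_comp_trans)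
    then show ?thesis by measurable
  qed
  have "L2inner M (\<lambda>x. F0 (inverse pr * x - a)) (\<lambda>x. G0 (inverse pr * x - b)) = (\<integral>x. h (inverse pr * x) \<partial>M)"
    unfolding L2inner_def h_def ..
  also have "\<dots> = complex_of_real (1 / real n0) * integral\<^sup>L M h" by (rule integral_dil[OF mh])
  also have "integral\<^sup>L M h = (\<integral>y. F0 y * cnj (G0 (y - (b - a))) \<partial>M)"
  proof -
    have "integral\<^sup>L M h = (\<integral>y. h (y + a) \<partial>M)" by (rule integral_trans[OF mh, symmetric])
    also have "\<dots> = (\<integral>y. F0 y * cnj (G0 (y - (b - a))) \<partial>M)"
      unfolding h_def by (simp add: algebra_simps)
    finally show ?thesis .
  qed
  finally show ?thesis unfolding L2inner_def .
qed

lemma recursion: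
  assumes Sf: "L2_series M f \<alpha> (dil_shift pr uu F0)" and Sg: "L2_series M g \<beta> (dil_shift pr uu G0)"
    and F0: "F0 \<in> L2 M" and G0: "G0 \<in> L2 M"
  shows "L2inner M f (\<lambda>x. g (x - w)) =
    lim (\<lambda>N. \<Sum>j<N. \<alpha> j * lim (\<lambda>N'. \<Sum>j'<N'. cnj (\<beta> j') *
       (complex_of_real (1 / real n0) * L2inner M F0 (\<lambda>x. G0 (x - (uu j' + inverse pr * w - uu j))))))"
proof -
  have Fj: "\<And>j. dil_shift pr uu F0 j \<in> L2 M" using Sf by (simp add: L2_series_def)
  have g: "g \<in> L2 M" using Sg by (simp add: L2_series_def)
  have Sg': "L2_series M (\<lambda>x. g (x - w)) \<beta> (\<lambda>k x. dil_shift pr uu G0 k (x - w))"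
    by (rule series_trans[OF Sg])
  have ip: "L2inner M (dil_shift pr uu F0 j) (\<lambda>x. dil_shift pr uu G0 j' (x - w))
      = complex_of_real (1 / real n0) * L2inner M F0 (\<lambda>x. G0 (x - (uu j' + inverse pr * w - uu j)))" for j j'
  proof -
    have e: "(\<lambda>x. dil_shift pr uu G0 j' (x - w)) = (\<lambda>x. G0 (inverse pr * x - (uu j' + inverse pr * w)))"
      unfolding dil_shift_def by (rule ext) (simp add: algebra_simps)
    show ?thesis unfolding e
      using dil_inner[OF F0 G0, of "uu j" "uu j' + inverse pr * w"] unfolding dil_shift_def
      by (simp add: algebra_simps)
  qed
  have inner: "(\<lambda>N'. \<Sum>j'<N'. cnj (\<beta> j') *
       (complex_of_real (1 / real n0) * L2inner M F0 (\<lambda>x. G0 (x - (uu j' + inverse pr * w - uu j)))))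
      \<longlonglongrightarrow> L2inner M (dil_shift pr uu F0 j) (\<lambda>x. g (x - w))" for j
    using lim_right[OF Sg' Fj[of j]] unfolding ip .
  have outer: "(\<lambda>N. \<Sum>j<N. \<alpha> j * L2inner M (dil_shift pr uu F0 j) (\<lambda>x. g (x - w)))
      \<longlonglongrightarrow> L2inner M f (\<lambda>x. g (x - w))"
    by (rule lim_left[OF Sf L2_trans[OF g]])
  have "lim (\<lambda>N. \<Sum>j<N. \<alpha> j * lim (\<lambda>N'. \<Sum>j'<N'. cnj (\<beta> j') *
       (complex_of_real (1 / real n0) * L2inner M F0 (\<lambda>x. G0 (x - (uu j' + inverse pr * w - uu j))))))
     = lim (\<lambda>N. \<Sum>j<N. \<alpha> j * L2inner M (dil_shift pr uu F0 j) (\<lambda>x. g (x - w)))"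
    using limI[OF inner] by simp
  also have "\<dots> = L2inner M f (\<lambda>x. g (x - w))" by (rule limI[OF outer])
  finally show ?thesis by simp
qed

end



context lf begin

definition Phi :: "(nat \<Rightarrow> complex) \<Rightarrow> (nat \<Rightarrow> complex) \<Rightarrow> 'k \<Rightarrow> ('k \<Rightarrow> complex) \<Rightarrow> complex" where
  "Phi \<alpha> \<beta> w h = lim (\<lambda>N. \<Sum>j<N. \<alpha> j * lim (\<lambda>N'. \<Sum>j'<N'. cnj (\<beta> j') *
       (complex_of_real (1 / real n0) * h (uu j' + inverse pr * w - uu j))))"

lemma recursion': 
  assumes "L2_series M f \<alpha> (dil_shift pr uu F0)" "L2_series M g \<beta> (dil_shift pr uu G0)"
    "F0 \<in> L2 M" "G0 \<in> L2 M"
  shows "L2inner M f (\<lambda>x. g (x - w)) = Phi \<alpha> \<beta> w (\<lambda>v. L2inner M F0 (\<lambda>x. G0 (x - v)))"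
  unfolding Phi_def by (rule recursion[OF assms])

lemma Phi_cong:
  assumes "\<And>j j'. h1 (uu j' + inverse pr * w - uu j) = h2 (uu j' + inverse pr * w - uu j)"
  shows "Phi \<alpha> \<beta> w h1 = Phi \<alpha> \<beta> w h2"
  unfolding Phi_def assms ..

lemma lim_zero: "lim (\<lambda>N. (0::complex)) = 0" by (rule limI) simp

lemma Phi_zero:
  assumes "\<And>j j'. h (uu j' + inverse pr * w - uu j) = 0"
  shows "Phi \<alpha> \<beta> w h = 0"
  unfolding Phi_def assms by (simp add: lim_zero)

lemma inner_swap:
  assumes f: "f \<in> borel_measurable M" and g: "g \<in> borel_measurable M"
  shows "L2inner M f (\<lambda>x. g (x - w)) = cnj (L2inner M g (\<lambda>x. f (x + w)))"
proof -
  have m: "(\<lambda>x. f x * cnj (g (x - w))) \<in> borel_measurable M"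
    using f meas_comp_trans[OF g, of w] by measurable
  have "L2inner M f (\<lambda>x. g (x - w)) = (\<integral>x. f (x + w) * cnj (g (x + w - w)) \<partial>M)"
    unfolding L2inner_def by (rule integral_trans[OF m, symmetric])
  also have "\<dots> = (\<integral>x. cnj (g x * cnj (f (x + w))) \<partial>M)" by (simp add: mult.commute)
  also have "\<dots> = cnj (L2inner M g (\<lambda>x. f (x + w)))" unfolding L2inner_def by (rule Bochner_Integration.integral_cnj)
  finally show ?thesis .
qed

lemma main:
  fixes phi phit :: "'k \<Rightarrow> complex" and psi psit :: "nat \<Rightarrow> 'k \<Rightarrow> complex"
    and a atil :: "nat \<Rightarrow> nat \<Rightarrow> complex" and omega omegat :: "nat \<Rightarrow> 'k \<Rightarrow> complex"
  assumes ref_phi: "L2_series M phi (\<lambda>k. complex_of_real (sqrt (real (p ^ c))) * a 0 k)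
                    (dil_shift pr uu phi)"
    and ref_phit: "L2_series M phit (\<lambda>k. complex_of_real (sqrt (real (p ^ c))) * atil 0 k)
                    (dil_shift pr uu phit)"
    and ref_psi: "\<forall>l\<in>{1..<p ^ c}. L2_series M (psi l) (\<lambda>k. complex_of_real (sqrt (real (p ^ c))) * a l k)
                    (dil_shift pr uu phi)"
    and ref_psit: "\<forall>l\<in>{1..<p ^ c}. L2_series M (psit l) (\<lambda>k. complex_of_real (sqrt (real (p ^ c))) * atil l k)
                    (dil_shift pr uu phit)"
    and bi1: "\<forall>k. L2inner M phi (\<lambda>x. phit (x - uu k)) = (if k = 0 then 1 else 0)"
    and bi2: "\<forall>k. \<forall>l\<in>{1..<p ^ c}. L2inner M phi (\<lambda>x. psit l (x - uu k)) = 0"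
    and bi3: "\<forall>k. \<forall>l\<in>{1..<p ^ c}. L2inner M phit (\<lambda>x. psi l (x - uu k)) = 0"
    and bi4: "\<forall>k. \<forall>l\<in>{1..<p ^ c}. \<forall>l'\<in>{1..<p ^ c}.
                L2inner M (psi l) (\<lambda>x. psit l' (x - uu k)) = (if l = l' \<and> k = 0 then 1 else 0)"
    and om0: "omega 0 = phi" and omt0: "omegat 0 = phit"
    and om: "\<forall>n. L2_series M (omega n) (\<lambda>k. complex_of_real (sqrt (real (p ^ c))) * a (n mod p ^ c) k)
                 (dil_shift pr uu (omega (n div p ^ c)))"
    and omt: "\<forall>n. L2_series M (omegat n) (\<lambda>k. complex_of_real (sqrt (real (p ^ c))) * atil (n mod p ^ c) k)
                 (dil_shift pr uu (omegat (n div p ^ c)))"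
  shows "\<forall>l n k. L2inner M (omega l) (\<lambda>x. omegat n (x - uu k))
           = (if l = n \<and> k = 0 then 1 else 0)"
proof -
  define Q where "Q = p ^ c"
  have Q2: "Q \<ge> 2" unfolding Q_def by (rule Q_ge2)
  define \<alpha> where "\<alpha> s k = complex_of_real (sqrt (real Q)) * a s k" for s k
  define \<beta> where "\<beta> s k = complex_of_real (sqrt (real Q)) * atil s k" for s k
  define ip where "ip l n v = L2inner M (omega l) (\<lambda>x. omegat n (x - v))" for l n v
  define \<Psi> where "\<Psi> s = (if s = 0 then phi else psi s)" for s
  define \<Psi>t where "\<Psi>t s = (if s = 0 then phit else psit s)" for s
  have omS: "L2_series M (omega n) (\<alpha> (n mod Q)) (dil_shift pr uu (omega (n div Q)))" for n
    using om unfolding \<alpha>_def Q_def by blast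
  have omtS: "L2_series M (omegat n) (\<beta> (n mod Q)) (dil_shift pr uu (omegat (n div Q)))" for n
    using omt unfolding \<beta>_def Q_def by blast
  have omL2: "omega n \<in> L2 M" for n using omS[of n] by (simp add: L2_series_def)
  have omtL2: "omegat n \<in> L2 M" for n using omtS[of n] by (simp add: L2_series_def)
  have phiL2: "phi \<in> L2 M" using omL2[of 0] om0 by simp
  have phitL2: "phit \<in> L2 M" using omtL2[of 0] omt0 by simp
  have rec: "ip l n w = Phi (\<alpha> (l mod Q)) (\<beta> (n mod Q)) w (ip (l div Q) (n div Q))" for l n w
    unfolding ip_def by (rule recursion'[OF omS omtS omL2 omtL2])
  have PsiS: "L2_series M (\<Psi> s) (\<alpha> s) (dil_shift pr uu phi)" if "s < Q" for s
  proof (cases "s = 0")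
    case True then show ?thesis using ref_phi unfolding \<Psi>_def \<alpha>_def Q_def by simp
  next
    case False then have "s \<in> {1..<p ^ c}" using that unfolding Q_def by simp
    then show ?thesis using ref_psi False unfolding \<Psi>_def \<alpha>_def Q_def by simp
  qed
  have PsitS: "L2_series M (\<Psi>t s) (\<beta> s) (dil_shift pr uu phit)" if "s < Q" for s
  proof (cases "s = 0")
    case True then show ?thesis using ref_phit unfolding \<Psi>t_def \<beta>_def Q_def by simp
  next
    case False then have "s \<in> {1..<p ^ c}" using that unfolding Q_def by simp
    then show ?thesis using ref_psit False unfolding \<Psi>t_def \<beta>_def Q_def by simp
  qed
  have ip00: "ip 0 0 = (\<lambda>v. L2inner M phi (\<lambda>x. phit (x - v)))"
    unfolding ip_def om0 omt0 ..
  have base_eq: "ip s s' w = L2inner M (\<Psi> s) (\<lambda>x. \<Psi>t s' (x - w))" if "s < Q" "s' < Q" for s s' w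
  proof -
    have "ip s s' w = Phi (\<alpha> s) (\<beta> s') w (ip 0 0)" using rec[of s s' w] that by simp
    also have "\<dots> = L2inner M (\<Psi> s) (\<lambda>x. \<Psi>t s' (x - w))"
      unfolding ip00 by (rule recursion'[OF PsiS[OF that(1)] PsitS[OF that(2)] phiL2 phitL2, symmetric])
    finally show ?thesis .
  qed
  have bival: "L2inner M (\<Psi> s) (\<lambda>x. \<Psi>t s' (x - uu k)) = (if s = s' \<and> k = 0 then 1 else 0)"
    if s: "s < Q" and s': "s' < Q" for s s' k
  proof (cases "s = 0")
    case True
    show ?thesis
    proof (cases "s' = 0")
      case True
      then show ?thesis using bi1 \<open>s = 0\<close> unfolding \<Psi>_def \<Psi>t_def by simp
    next
      case False
      then have "s' \<in> {1..<p ^ c}" using s' unfolding Q_def by simp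
      then show ?thesis using bi2 \<open>s = 0\<close> False unfolding \<Psi>_def \<Psi>t_def by simp
    qed
  next
    case False
    then have sI: "s \<in> {1..<p ^ c}" using s unfolding Q_def by simp
    have psiL2: "psi s \<in> L2 M" using PsiS[OF s] False unfolding \<Psi>_def by (simp add: L2_series_def)
    show ?thesis
    proof (cases "s' = 0")
      case True
      obtain m where m: "uu m = - uu k" using uu_neg by blast
      have "L2inner M (psi s) (\<lambda>x. phit (x - uu k)) = cnj (L2inner M phit (\<lambda>x. psi s (x + uu k)))"
        by (rule inner_swap[OF L2_meas[OF psiL2] L2_meas[OF phitL2]])
      also have "(\<lambda>x. psi s (x + uu k)) = (\<lambda>x. psi s (x - uu m))" using m by simp
      also have "L2inner M phit (\<lambda>x. psi s (x - uu m)) = 0" using bi3 sI by blast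
      finally show ?thesis using True False unfolding \<Psi>_def \<Psi>t_def by simp
    next
      case False
      then have "s' \<in> {1..<p ^ c}" using s' unfolding Q_def by simp
      then show ?thesis using bi4 sI False \<open>s \<noteq> 0\<close> unfolding \<Psi>_def \<Psi>t_def by simp
    qed
  qed
  have ip00v: "ip 0 0 (uu m) = (if m = 0 then 1 else 0)" for m using bi1 unfolding ip00 by simp
  have main: "\<forall>k. ip l n (uu k) = (if l = n \<and> k = 0 then 1 else 0)" for l n
  proof (induction "l + n" arbitrary: l n rule: less_induct)
    case less
    show ?case
    proof
      fix k
      define r where "r = l div Q"
      define r' where "r' = n div Q"
      define s where "s = l mod Q"
      define s' where "s' = n mod Q"
      have sQ: "s < Q" "s' < Q" using Q2 unfolding s_def s'_def by simp_all
      have ls: "l = Q * r + s" "n = Q * r' + s'" unfolding r_def s_def r'_def s'_def by simp_all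
      show "ip l n (uu k) = (if l = n \<and> k = 0 then 1 else 0)"
      proof (cases "r = 0 \<and> r' = 0")
        case True
        then have "l = s" "n = s'" using ls by simp_all
        then show ?thesis using base_eq[OF sQ] bival[OF sQ] by simp
      next
        case False
        have "r \<le> l" "r' \<le> n" unfolding r_def r'_def by simp_all
        moreover have "r < l \<or> r' < n"
        proof -
          have "r > 0 \<or> r' > 0" using False by simp
          moreover have "Q * r \<ge> 2 * r" "Q * r' \<ge> 2 * r'" using Q2 by simp_all
          ultimately show ?thesis using ls by linarith
        qed
        ultimately have lt: "r + r' < l + n" by linarith
        have IH: "\<forall>k. ip r r' (uu k) = (if r = r' \<and> k = 0 then 1 else 0)"
          by (rule less.hyps[OF lt])
        have recl: "ip l n (uu k) = Phi (\<alpha> s) (\<beta> s') (uu k) (ip r r')"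
          unfolding s_def s'_def r_def r'_def by (rule rec)
        show ?thesis
        proof (cases "r = r'")
          case True
          have "Phi (\<alpha> s) (\<beta> s') (uu k) (ip r r') = Phi (\<alpha> s) (\<beta> s') (uu k) (ip 0 0)"
          proof (rule Phi_cong)
            fix j j'
            obtain m where m: "uu m = uu j' + inverse pr * uu k - uu j" using uu_closed by blast
            show "ip r r' (uu j' + inverse pr * uu k - uu j) = ip 0 0 (uu j' + inverse pr * uu k - uu j)"
              unfolding m[symmetric] using IH ip00v True by simp
          qed
          also have "\<dots> = ip s s' (uu k)" using rec[of s s' "uu k"] sQ by simp
          also have "\<dots> = (if s = s' \<and> k = 0 then 1 else 0)" using base_eq[OF sQ] bival[OF sQ] by simp
          moreover have "l = n \<longleftrightarrow> s = s'" using ls True by auto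
          ultimately show ?thesis using recl by simp
        next
          case False
          have "Phi (\<alpha> s) (\<beta> s') (uu k) (ip r r') = 0"
          proof (rule Phi_zero)
            fix j j'
            obtain m where m: "uu m = uu j' + inverse pr * uu k - uu j" using uu_closed by blast
            show "ip r r' (uu j' + inverse pr * uu k - uu j) = 0"
              unfolding m[symmetric] using IH False by simp
          qed
          moreover have "l \<noteq> n" using False unfolding r_def r'_def by auto
          ultimately show ?thesis using recl by simp
        qed
      qed
    qed
  qed
  show ?thesis using main unfolding ip_def by blast
qed

end

theorem theorem3p4:
  fixes absv :: "'k::field \<Rightarrow> real" and p c :: nat and pr :: 'k and zeta :: "nat \<Rightarrow> 'k"
    and M :: "'k measure"
    and phi phit :: "'k \<Rightarrow> complex" and psi psit :: "nat \<Rightarrow> 'k \<Rightarrow> complex"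
    and a atil :: "nat \<Rightarrow> nat \<Rightarrow> complex"
    and V :: "int \<Rightarrow> ('k \<Rightarrow> complex) set" and W :: "('k \<Rightarrow> complex) set"
    and omega omegat :: "nat \<Rightarrow> 'k \<Rightarrow> complex"
  assumes K: "local_field_pc absv p"
    and pr: "prime_element absv (p ^ c) pr"
    and zeta: "residue_basis absv p c zeta"
    and haar: "haar_normalized absv M"
    and coeff_l2: "\<forall>s<p ^ c. summable (\<lambda>k. (cmod (a s k))\<^sup>2) \<and> summable (\<lambda>k. (cmod (atil s k))\<^sup>2)"
    and ref_phi: "L2_series M phi (\<lambda>k. complex_of_real (sqrt (real (p ^ c))) * a 0 k)
                    (dil_shift pr (uK pr zeta p c) phi)"
    and ref_phit: "L2_series M phit (\<lambda>k. complex_of_real (sqrt (real (p ^ c))) * atil 0 k)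
                    (dil_shift pr (uK pr zeta p c) phit)"
    and ref_psi: "\<forall>l\<in>{1..<p ^ c}. L2_series M (psi l) (\<lambda>k. complex_of_real (sqrt (real (p ^ c))) * a l k)
                    (dil_shift pr (uK pr zeta p c) phi)"
    and ref_psit: "\<forall>l\<in>{1..<p ^ c}. L2_series M (psit l) (\<lambda>k. complex_of_real (sqrt (real (p ^ c))) * atil l k)
                    (dil_shift pr (uK pr zeta p c) phit)"
    and mra: "mra M pr (uK pr zeta p c) V phi"
    and compl: "direct_complement M W (V 0) (V 1)"
    and riesz: "riesz_basis M W ({1..<p ^ c} \<times> UNIV) (\<lambda>(l, k) x. psi l (x - uK pr zeta p c k))"
    and bi1: "\<forall>k. L2inner M phi (\<lambda>x. phit (x - uK pr zeta p c k)) = (if k = 0 then 1 else 0)"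
    and bi2: "\<forall>k. \<forall>l\<in>{1..<p ^ c}. L2inner M phi (\<lambda>x. psit l (x - uK pr zeta p c k)) = 0"
    and bi3: "\<forall>k. \<forall>l\<in>{1..<p ^ c}. L2inner M phit (\<lambda>x. psi l (x - uK pr zeta p c k)) = 0"
    and bi4: "\<forall>k. \<forall>l\<in>{1..<p ^ c}. \<forall>l'\<in>{1..<p ^ c}.
                L2inner M (psi l) (\<lambda>x. psit l' (x - uK pr zeta p c k)) = (if l = l' \<and> k = 0 then 1 else 0)"
    and om0: "omega 0 = phi" and omt0: "omegat 0 = phit"
    and om: "\<forall>n. L2_series M (omega n) (\<lambda>k. complex_of_real (sqrt (real (p ^ c))) * a (n mod p ^ c) k)
                 (dil_shift pr (uK pr zeta p c) (omega (n div p ^ c)))"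
    and omt: "\<forall>n. L2_series M (omegat n) (\<lambda>k. complex_of_real (sqrt (real (p ^ c))) * atil (n mod p ^ c) k)
                 (dil_shift pr (uK pr zeta p c) (omegat (n div p ^ c)))"
  shows "\<forall>l n k. L2inner M (omega l) (\<lambda>x. omegat n (x - uK pr zeta p c k))
           = (if l = n \<and> k = 0 then 1 else 0)"
proof -
  interpret lf absv p c pr zeta M by (unfold_locales; fact)
  show ?thesis
    by (rule main[unfolded uu_def, OF ref_phi ref_phit ref_psi ref_psit bi1 bi2 bi3 bi4 om0 omt0 om omt])
qed

end
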